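(* Let $a,c\in\mathbb{C}$ satisfy $2c\notin\{0,-1,-2,\dots\}$, $2a\notin\{1,2,3,\dots\}$ and $\operatorname{Re}(c-a)>\tfrac12$. Then $$ {}_2H_2\!\left[\begin{matrix} a,\ a+\tfrac12\\ c,\ c+\tfrac12\end{matrix};\ -1\right]=\frac{\Gamma(2c)\,\Gamma(1-2a)}{\Gamma(2c-2a)}\cdot 2^{\,c-a-\frac12}\cos\!\left(\frac{(2c+2a-1)\pi}{4}\right). $$
   Context: For $x\in\mathbb{C}$ and integers $m$, the Pochhammer symbol is $(x)_0=1$, $(x)_m=x(x+1)\cdots(x+m-1)$ for $m\ge1$, and $(x)_{-m}=\dfrac{1}{(x-1)(x-2)\cdots(x-m)}$ for $m\ge1$. The bilateral hypergeometric series is $$ {}_2H_2\!\left[\begin{matrix} a_1,a_2\\ b_1,b_2\end{matrix};z\right]=\sum_{m=-\infty}^{\infty}\frac{(a_1)_m(a_2)_m}{(b_1)_m(b_2)_m}\,z^m , $$ which under the stated hypotheses converges absolutely at $z=-1$. (The paper's displayed equation (23) has the power $2^{c-a-3/2}$, which is a typo; its preceding line (22) and the consequence (24) give $2^{c-a-1/2}$ as stated here.) *)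

theory Defs
  imports "HOL-Analysis.Analysis"
begin

definition poch_int :: "complex \<Rightarrow> int \<Rightarrow> complex" where
  "poch_int x m = (if 0 \<le> m then pochhammer x (nat m)
                   else 1 / (\<Prod>k=1..nat (- m). (x - of_nat k)))"

definition H22_term :: "complex \<Rightarrow> complex \<Rightarrow> complex \<Rightarrow> complex \<Rightarrow> complex \<Rightarrow> int \<Rightarrow> complex" where
  "H22_term a1 a2 b1 b2 z m =
     (poch_int a1 m * poch_int a2 m) / (poch_int b1 m * poch_int b2 m) * z powi m"

definition H22 :: "complex \<Rightarrow> complex \<Rightarrow> complex \<Rightarrow> complex \<Rightarrow> complex \<Rightarrow> complex" where
  "H22 a1 a2 b1 b2 z = (\<Sum>\<^sub>\<infinity>m\<in>(UNIV::int set). H22_term a1 a2 b1 b2 z m)"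

end

theory Submission
  imports Defs "HOL-Real_Asymp.Real_Asymp"
begin


lemma aux_pow_up:
  assumes "m \<ge> (2::nat)"
  shows "(real m - 1) powr s \<le> 3 powr \<bar>s\<bar> * (real m + 1) powr s"
proof (cases "s \<ge> 0")
  case True
  have "(real m - 1) powr s \<le> (real m + 1) powr s"
    using assms True by (intro powr_mono2) auto
  also have "\<dots> \<le> 3 powr \<bar>s\<bar> * (real m + 1) powr s"
  proof -
    have h: "1 \<le> 3 powr \<bar>s\<bar>" by (rule ge_one_powr_ge_zero) auto
    show ?thesis using mult_right_mono[OF h powr_ge_zero[of "real m+1" s]] by simp
  qed
  finally show ?thesis .
next
  case False
  have "(real m - 1) powr s \<le> ((real m + 1) / 3) powr s"
    using assms False by (intro powr_mono2') auto
  also have "\<dots> = 3 powr \<bar>s\<bar> * (real m + 1) powr s"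
    using False by (simp add: powr_divide powr_minus field_simps)
  finally show ?thesis .
qed

lemma aux_pow_low:
  assumes "m \<ge> (2::nat)"
  shows "(real m + 1) powr s / 3 powr \<bar>s\<bar> \<le> (real m - 1) powr s"
proof (cases "s \<ge> 0")
  case True
  have "(real m + 1) powr s / 3 powr \<bar>s\<bar> = ((real m + 1) / 3) powr s"
    using True by (simp add: powr_divide)
  also have "\<dots> \<le> (real m - 1) powr s"
    using assms True by (intro powr_mono2) auto
  finally show ?thesis .
next
  case False
  have "(real m + 1) powr s / 3 powr \<bar>s\<bar> \<le> (real m + 1) powr s"
    using ge_one_powr_ge_zero[of 3 "\<bar>s\<bar>"]
    by (simp add: divide_le_eq)
  also have "\<dots> \<le> (real m - 1) powr s"
    using assms False by (intro powr_mono2') auto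
  finally show ?thesis .
qed

lemma norm_exp_ln_nat:
  fixes x :: complex
  assumes "n > 0"
  shows "norm (exp (x * of_real (ln (real n)))) = real n powr Re x"
  using assms by (simp add: powr_def)

lemma poch_bound_upper:
  fixes x :: complex
  obtains K where "K > 0" "\<And>n. norm (pochhammer x n) \<le> K * fact n * (real n + 1) powr (Re x - 1)"
proof -
  have "convergent (rGamma_series x)"
    using rGamma_series_LIMSEQ[of x] by (auto simp: convergent_def)
  then have "Bseq (rGamma_series x)" by (rule convergent_imp_Bseq)
  then obtain B where B: "B > 0" "\<And>n. norm (rGamma_series x n) \<le> B"
    by (auto simp: Bseq_def)
  define s where "s = Re x"
  define K where "K = 1 + norm x * 2 powr (1 - s) + B * 2 * 3 powr \<bar>s\<bar>"
  have Kpos: "K > 0" unfolding K_def using B by (intro add_pos_nonneg) auto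
  have main: "norm (pochhammer x n) \<le> K * fact n * (real n + 1) powr (s - 1)" for n
  proof -
    consider "n = 0" | "n = 1" | "n \<ge> 2" by linarith
    then show ?thesis
    proof cases
      case 1
      then show ?thesis unfolding K_def using B
        by simp
    next
      case 2
      have "norm x = norm x * 2 powr (1 - s) * 2 powr (s - 1)"
        by (simp add: powr_minus[symmetric] powr_add[symmetric])
      also have "\<dots> \<le> K * 2 powr (s - 1)"
        unfolding K_def using B by (intro mult_right_mono) (auto intro!: add_nonneg_nonneg)
      finally show ?thesis using 2 by simp
    next
      case 3
      define m where "m = n - 1"
      have m: "m \<ge> 1" "n = m + 1" using 3 unfolding m_def by auto
      have "pochhammer x n = rGamma_series x m * (fact m * exp (x * of_real (ln (real m))))"
        using m by (simp add: rGamma_series_def)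
      then have "norm (pochhammer x n) = norm (rGamma_series x m) * fact m * real m powr s"
        using m by (simp add: norm_mult s_def powr_def)
      also have "\<dots> \<le> B * fact m * real m powr s"
        using B by (intro mult_right_mono) auto
      also have "real m = real n - 1" using m by simp
      also have "B * fact m * (real n - 1) powr s \<le> B * fact m * (3 powr \<bar>s\<bar> * (real n + 1) powr s)"
        using B aux_pow_up[OF 3, of s] by (intro mult_left_mono) auto
      also have "fact m = fact n / real n" using m by (simp add: fact_reduce)
      also have "B * (fact n / real n) * (3 powr \<bar>s\<bar> * (real n + 1) powr s)
          \<le> B * (fact n * (2 / (real n + 1))) * (3 powr \<bar>s\<bar> * (real n + 1) powr s)"
        using B 3 by (intro mult_right_mono mult_left_mono) (auto simp: field_simps)
      also have "\<dots> = (B * 2 * 3 powr \<bar>s\<bar>) * fact n * ((real n + 1) powr s / (real n + 1))"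
        by (simp add: field_simps)
      also have "(real n + 1) powr s / (real n + 1) = (real n + 1) powr (s - 1)"
        by (simp add: powr_diff)
      also have "(B * 2 * 3 powr \<bar>s\<bar>) * fact n * (real n + 1) powr (s - 1) \<le> K * fact n * (real n + 1) powr (s - 1)"
        unfolding K_def by (intro mult_right_mono) auto
      finally show ?thesis .
    qed
  qed
  show ?thesis using that Kpos main unfolding s_def by blast
qed

lemma poch_bound_lower:
  fixes x :: complex
  assumes x: "x \<notin> \<int>\<^sub>\<le>\<^sub>0"
  obtains k where "k > 0" "\<And>n. k * fact n * (real n + 1) powr (Re x - 1) \<le> norm (pochhammer x n)"
proof -
  have "convergent (Gamma_series x)"
    using Gamma_series_LIMSEQ[of x] by (auto simp: convergent_def)
  then have "Bseq (Gamma_series x)" by (rule convergent_imp_Bseq)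
  then obtain B where B: "B > 0" "\<And>n. norm (Gamma_series x n) \<le> B"
    by (auto simp: Bseq_def)
  define s where "s = Re x"
  have x0: "x \<noteq> 0" using x by auto
  have pnz: "pochhammer x n \<noteq> 0" for n
    using x by (auto simp: pochhammer_eq_0_iff)
  define k where "k = min 1 (min (norm x / 2 powr (s - 1)) (1 / (3 powr \<bar>s\<bar> * B)))"
  have kpos: "k > 0" unfolding k_def using B x0 by auto
  have main: "k * fact n * (real n + 1) powr (s - 1) \<le> norm (pochhammer x n)" for n
  proof -
    consider "n = 0" | "n = 1" | "n \<ge> 2" by linarith
    then show ?thesis
    proof cases
      case 1
      then show ?thesis unfolding k_def by simp
    next
      case 2
      have "k * 2 powr (s - 1) \<le> (norm x / 2 powr (s - 1)) * 2 powr (s - 1)"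
        unfolding k_def by (intro mult_right_mono) auto
      also have "\<dots> = norm x" by simp
      finally show ?thesis using 2 by simp
    next
      case 3
      define m where "m = n - 1"
      have m: "m \<ge> 1" "n = m + 1" using 3 unfolding m_def by auto
      have "Gamma_series x m = fact m * exp (x * of_real (ln (real m))) / pochhammer x n"
        using m by (simp add: Gamma_series_def)
      then have "norm (Gamma_series x m) = fact m * real m powr s / norm (pochhammer x n)"
        using m by (simp add: norm_mult norm_divide s_def powr_def)
      then have "fact m * real m powr s / norm (pochhammer x n) \<le> B" using B(2)[of m] by simp
      then have A: "fact m * real m powr s \<le> B * norm (pochhammer x n)"
        using pnz[of n] by (simp add: divide_le_eq mult.commute)
      have e1: "fact n * (real n + 1) powr (s - 1) = fact n / (real n + 1) * (real n + 1) powr s"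
        by (simp add: powr_diff)
      have e2: "fact n / (real n + 1) \<le> fact m"
        using m by (simp add: fact_reduce field_simps)
      have e3: "(real n + 1) powr s \<le> 3 powr \<bar>s\<bar> * real m powr s"
        using aux_pow_low[OF 3, of s] m by (simp add: field_simps)
      have "fact n * (real n + 1) powr (s - 1) \<le> fact m * (3 powr \<bar>s\<bar> * real m powr s)"
        unfolding e1 by (intro mult_mono e2 e3) auto
      also have "\<dots> = 3 powr \<bar>s\<bar> * (fact m * real m powr s)" by simp
      also have "\<dots> \<le> 3 powr \<bar>s\<bar> * (B * norm (pochhammer x n))"
        using A by (intro mult_left_mono) auto
      finally have F: "fact n * (real n + 1) powr (s - 1) \<le> 3 powr \<bar>s\<bar> * B * norm (pochhammer x n)"
        by simp
      have "k * fact n * (real n + 1) powr (s - 1) \<le> (1 / (3 powr \<bar>s\<bar> * B)) * (fact n * (real n + 1) powr (s - 1))"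
        unfolding k_def by (simp only: mult.assoc) (intro mult_right_mono; auto)
      also have "\<dots> \<le> (1 / (3 powr \<bar>s\<bar> * B)) * (3 powr \<bar>s\<bar> * B * norm (pochhammer x n))"
        using B F by (intro mult_left_mono) auto
      also have "\<dots> = norm (pochhammer x n)" using B by simp
      finally show ?thesis .
    qed
  qed
  show ?thesis using that kpos main unfolding s_def by blast
qed



definition gterm :: "complex \<Rightarrow> complex \<Rightarrow> complex \<Rightarrow> nat \<Rightarrow> complex" where
  "gterm a b c k = pochhammer a k * pochhammer b k / (pochhammer c k * fact k)"

lemma summable_powr_shift:
  assumes "t < -1"
  shows "summable (\<lambda>k::nat. (real k + 1) powr t)"
proof -
  have "summable (\<lambda>k::nat. real k powr t)" using assms by (simp add: summable_real_powr_iff)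
  then have "summable (\<lambda>k::nat. real (Suc k) powr t)" by (subst summable_Suc_iff)
  then show ?thesis by (simp add: add.commute)
qed

lemma powr_combine3:
  assumes "(y::real) > 0"
  shows "y powr p * y powr q / y powr r = y powr (p + q - r)"
  using assms by (simp add: powr_add powr_diff)

lemma gterm_bound:
  assumes c: "c \<notin> \<int>\<^sub>\<le>\<^sub>0"
  obtains K where "K > 0" "\<And>k. norm (gterm a b c k) \<le> K * (real k + 1) powr (Re (a + b - c) - 1)"
proof -
  obtain Ka where Ka: "Ka > 0" "\<And>n. norm (pochhammer a n) \<le> Ka * fact n * (real n + 1) powr (Re a - 1)"
    using poch_bound_upper by blast
  obtain Kb where Kb: "Kb > 0" "\<And>n. norm (pochhammer b n) \<le> Kb * fact n * (real n + 1) powr (Re b - 1)"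
    using poch_bound_upper by blast
  obtain kc where kc: "kc > 0" "\<And>n. kc * fact n * (real n + 1) powr (Re c - 1) \<le> norm (pochhammer c n)"
    using poch_bound_lower[OF c] by blast
  define K where "K = Ka * Kb / kc"
  have "norm (gterm a b c k) \<le> K * (real k + 1) powr (Re (a + b - c) - 1)" for k
  proof -
    define y where "y = real k + 1"
    have y: "y > 0" unfolding y_def by simp
    have fpos: "(fact k :: real) > 0" by simp
    have "norm (gterm a b c k) = norm (pochhammer a k) * norm (pochhammer b k) / (norm (pochhammer c k) * fact k)"
      by (simp add: gterm_def norm_mult norm_divide)
    also have "\<dots> \<le> (Ka * fact k * y powr (Re a - 1)) * (Kb * fact k * y powr (Re b - 1)) /
                    ((kc * fact k * y powr (Re c - 1)) * fact k)"
      unfolding y_def using Ka Kb kc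
      by (intro frac_le mult_mono mult_right_mono mult_pos_pos) auto
    also have "\<dots> = K * (y powr (Re a - 1) * y powr (Re b - 1) / y powr (Re c - 1))"
      unfolding K_def using kc fpos by (simp add: field_simps)
    also have "y powr (Re a - 1) * y powr (Re b - 1) / y powr (Re c - 1) = y powr (Re (a + b - c) - 1)"
      using y by (subst powr_combine3) (auto intro: arg_cong[where f="(powr) y"])
    finally show ?thesis unfolding y_def .
  qed
  moreover have "K > 0" unfolding K_def using Ka Kb kc by simp
  ultimately show ?thesis using that by blast
qed

lemma gterm_summable_norm:
  assumes c: "c \<notin> \<int>\<^sub>\<le>\<^sub>0" and r: "Re (c - a - b) > 0"
  shows "summable (\<lambda>k. norm (gterm a b c k))"
proof -
  obtain K where K: "K > 0" "\<And>k. norm (gterm a b c k) \<le> K * (real k + 1) powr (Re (a + b - c) - 1)"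
    using gterm_bound[OF c] by blast
  have "summable (\<lambda>k::nat. (real k + 1) powr (Re (a + b - c) - 1))"
    using r by (intro summable_powr_shift) simp
  then have "summable (\<lambda>k::nat. K * (real k + 1) powr (Re (a + b - c) - 1))"
    by (rule summable_mult)
  then show ?thesis by (rule summable_comparison_test'[where N=0]) (use K in auto)
qed

lemma nonpos_Ints_add_nat:
  fixes c :: complex
  assumes "c \<notin> \<int>\<^sub>\<le>\<^sub>0"
  shows "c + of_nat n \<notin> \<int>\<^sub>\<le>\<^sub>0"
proof
  assume "c + of_nat n \<in> \<int>\<^sub>\<le>\<^sub>0"
  then obtain k where "c + of_nat n = - of_nat k" by (auto elim!: nonpos_Ints_cases')
  then have "c = - of_nat (k + n)" by (simp add: algebra_simps)
  then have "c \<in> \<int>\<^sub>\<le>\<^sub>0" by (simp only: minus_of_nat_in_nonpos_Ints)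
  then show False using assms by auto
qed

lemma nonpos_Ints_add1:
  fixes c :: complex
  assumes "c \<notin> \<int>\<^sub>\<le>\<^sub>0"
  shows "c + 1 \<notin> \<int>\<^sub>\<le>\<^sub>0"
  using nonpos_Ints_add_nat[OF assms, of 1] by simp

lemma poch_nz:
  fixes c :: complex
  assumes "c \<notin> \<int>\<^sub>\<le>\<^sub>0"
  shows "pochhammer c k \<noteq> 0"
  using assms by (auto simp: pochhammer_eq_0_iff)

lemma nonpos_Int_nz:
  fixes c :: complex
  assumes "c \<notin> \<int>\<^sub>\<le>\<^sub>0"
  shows "c + of_nat k \<noteq> 0"
  using nonpos_Ints_add_nat[OF assms, of k] by auto

lemma gauss_contig:
  assumes c: "c \<notin> \<int>\<^sub>\<le>\<^sub>0" and r: "Re (c - a - b) > 0"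
  shows "c * (c - a - b) * suminf (gterm a b c) = (c - a) * (c - b) * suminf (gterm a b (c + 1))"
proof -
  have c1: "c + 1 \<notin> \<int>\<^sub>\<le>\<^sub>0" using nonpos_Ints_add1[OF c] .
  have r1: "Re (c + 1 - a - b) > 0" using r by simp
  define t where "t = gterm a b c"
  define s where "s = gterm a b (c + 1)"
  define g where "g k = of_nat k * (c + of_nat k) * s k" for k
  have P1: "c * t k = (c + of_nat k) * s k" for k
  proof -
    have e: "c * pochhammer (c + 1) k = (c + of_nat k) * pochhammer c k"
      by (metis pochhammer_rec pochhammer_rec')
    have e': "c / pochhammer c k = (c + of_nat k) / pochhammer (c + 1) k"
      using poch_nz[OF c, of k] poch_nz[OF c1, of k] e by (simp add: field_simps)
    have "c * t k = pochhammer a k * pochhammer b k / fact k * (c / pochhammer c k)"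
      by (simp add: t_def gterm_def mult_ac)
    also have "\<dots> = pochhammer a k * pochhammer b k / fact k * ((c + of_nat k) / pochhammer (c + 1) k)"
      by (simp only: e')
    also have "\<dots> = (c + of_nat k) * s k" by (simp add: s_def gterm_def mult_ac)
    finally show ?thesis .
  qed
  have P2: "g (Suc k) = (a + of_nat k) * (b + of_nat k) * s k" for k
  proof -
    have nz: "c + 1 + of_nat k \<noteq> 0" using nonpos_Int_nz[OF c1, of k] .
    have sS: "s (Suc k) = s k * ((a + of_nat k) * (b + of_nat k) / ((c + 1 + of_nat k) * of_nat (Suc k)))"
    proof -
      have "s (Suc k) = (pochhammer a k * (a + of_nat k)) * (pochhammer b k * (b + of_nat k)) /
             ((pochhammer (c + 1) k * (c + 1 + of_nat k)) * (fact k * of_nat (Suc k)))"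
        by (simp add: s_def gterm_def pochhammer_rec' mult_ac)
      also have "\<dots> = (pochhammer a k * pochhammer b k / (pochhammer (c + 1) k * fact k)) *
             ((a + of_nat k) * (b + of_nat k) / ((c + 1 + of_nat k) * of_nat (Suc k)))"
        by (simp add: mult_ac)
      finally show ?thesis by (simp add: s_def gterm_def)
    qed
    have nz2: "(c + 1 + of_nat k) * of_nat (Suc k) \<noteq> 0" using nz by (simp del: of_nat_Suc)
    have cancel: "\<And>N y X. N \<noteq> (0::complex) \<Longrightarrow> N * (y * (X / N)) = y * X" by simp
    have "g (Suc k) = ((c + 1 + of_nat k) * of_nat (Suc k)) * s (Suc k)"
      unfolding g_def by (simp add: algebra_simps)
    also have "\<dots> = s k * ((a + of_nat k) * (b + of_nat k))"
      unfolding sS by (rule cancel[OF nz2])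
    finally show ?thesis by (simp add: mult_ac)
  qed
  have P3: "c * (c - a - b) * t k - (c - a) * (c - b) * s k = g k - g (Suc k)" for k
  proof -
    have "c * (c - a - b) * t k = (c - a - b) * ((c + of_nat k) * s k)"
      using P1[of k] by (simp add: algebra_simps)
    then show ?thesis unfolding P2 by (simp add: g_def algebra_simps)
  qed
  obtain K where K: "K > 0" "\<And>k. norm (s k) \<le> K * (real k + 1) powr (Re (a + b - (c + 1)) - 1)"
    using gterm_bound[OF c1, of a b] unfolding s_def by blast
  have glim: "g \<longlonglongrightarrow> 0"
  proof (rule Lim_null_comparison)
    show "\<forall>\<^sub>F k in sequentially. norm (g k) \<le> (norm c + 1) * K * (real k + 1) powr (Re (a + b - c))"
    proof (intro always_eventually allI)
      fix k
      have y: "real k + 1 > 0" by simp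
      have nge: "norm (g k) = real k * norm (c + of_nat k) * norm (s k)"
        by (simp add: g_def norm_mult)
      have "norm (c + of_nat k) \<le> norm c + real k" by (metis norm_of_nat norm_triangle_ineq)
      moreover have "0 \<le> real k * norm c" by simp
      ultimately have h0: "norm (c + of_nat k) \<le> 1 + (real k + (norm c + real k * norm c))"
        by linarith
      have "(norm c + 1) * (real k + 1) = 1 + (real k + (norm c + real k * norm c))"
        by (simp add: algebra_simps)
      with h0 have h: "norm (c + of_nat k) \<le> (norm c + 1) * (real k + 1)" by simp
      have "real k * norm (c + of_nat k) \<le> (real k + 1) * ((norm c + 1) * (real k + 1))"
        by (intro mult_mono h) auto
      also have "\<dots> = (norm c + 1) * (real k + 1) powr 2"
        using y by (simp add: power2_eq_square powr_numeral)
      finally have hh: "real k * norm (c + of_nat k) \<le> (norm c + 1) * (real k + 1) powr 2" .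
      have "norm (g k) \<le> ((norm c + 1) * (real k + 1) powr 2) * (K * (real k + 1) powr (Re (a + b - (c + 1)) - 1))"
        unfolding nge by (intro mult_mono K(2) hh) auto
      also have "\<dots> = (norm c + 1) * K * ((real k + 1) powr 2 * (real k + 1) powr (Re (a + b - (c + 1)) - 1))"
        by (simp add: algebra_simps)
      also have "(real k + 1) powr 2 * (real k + 1) powr (Re (a + b - (c + 1)) - 1) =
                 (real k + 1) powr (2 + (Re (a + b - (c + 1)) - 1))"
        by (rule powr_add[symmetric])
      also have "2 + (Re (a + b - (c + 1)) - 1) = Re (a + b - c)" by simp
      finally show "norm (g k) \<le> (norm c + 1) * K * (real k + 1) powr (Re (a + b - c))" .
    qed
    have "(\<lambda>k. (real k + 1) powr (Re (a + b - c))) \<longlonglongrightarrow> 0"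
      using r by (intro tendsto_neg_powr) (simp, real_asymp)
    then show "(\<lambda>k. (norm c + 1) * K * (real k + 1) powr (Re (a + b - c))) \<longlonglongrightarrow> 0"
      by (intro tendsto_mult_right_zero)
  qed
  have "(\<lambda>k. g k - g (Suc k)) sums (g 0 - 0)" by (rule telescope_sums'[OF glim])
  then have S1: "(\<lambda>k. c * (c - a - b) * t k - (c - a) * (c - b) * s k) sums 0"
    by (simp add: P3 g_def)
  have st: "summable t" unfolding t_def
    using gterm_summable_norm[OF c r] summable_norm_cancel by blast
  have ss: "summable s" unfolding s_def
    using gterm_summable_norm[OF c1 r1] summable_norm_cancel by blast
  have S2: "(\<lambda>k. c * (c - a - b) * t k - (c - a) * (c - b) * s k) sums
              (c * (c - a - b) * suminf t - (c - a) * (c - b) * suminf s)"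
    by (intro sums_diff sums_mult summable_sums st ss)
  from sums_unique2[OF S1 S2] show ?thesis unfolding t_def s_def by simp
qed



lemma gauss_iter:
  assumes c: "c \<notin> \<int>\<^sub>\<le>\<^sub>0" and r: "Re (c - a - b) > 0"
  shows "suminf (gterm a b c) * (pochhammer c m * pochhammer (c - a - b) m) =
         pochhammer (c - a) m * pochhammer (c - b) m * suminf (gterm a b (c + of_nat m))"
proof (induction m)
  case 0
  then show ?case by simp
next
  case (Suc m)
  define c' where "c' = c + of_nat m"
  have c': "c' \<notin> \<int>\<^sub>\<le>\<^sub>0" unfolding c'_def by (rule nonpos_Ints_add_nat[OF c])
  have r': "Re (c' - a - b) > 0" unfolding c'_def using r by simp
  have C: "c' * (c' - a - b) * suminf (gterm a b c') = (c' - a) * (c' - b) * suminf (gterm a b (c' + 1))"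
    by (rule gauss_contig[OF c' r'])
  have "suminf (gterm a b c) * (pochhammer c (Suc m) * pochhammer (c - a - b) (Suc m)) =
        (suminf (gterm a b c) * (pochhammer c m * pochhammer (c - a - b) m)) * (c' * (c' - a - b))"
    by (simp add: pochhammer_rec' c'_def algebra_simps)
  also have "\<dots> = pochhammer (c - a) m * pochhammer (c - b) m * (c' * (c' - a - b) * suminf (gterm a b c'))"
    unfolding Suc.IH c'_def by (simp add: algebra_simps)
  also have "\<dots> = pochhammer (c - a) m * pochhammer (c - b) m * ((c' - a) * (c' - b) * suminf (gterm a b (c' + 1)))"
    unfolding C ..
  also have "\<dots> = pochhammer (c - a) (Suc m) * pochhammer (c - b) (Suc m) * suminf (gterm a b (c + of_nat (Suc m)))"
    by (simp add: pochhammer_rec' c'_def algebra_simps)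
  finally show ?case .
qed

lemma Re_pos_not_nonpos_Int:
  fixes z :: complex
  assumes "Re z > 0"
  shows "z \<notin> \<int>\<^sub>\<le>\<^sub>0"
  using assms by (auto elim!: nonpos_Ints_cases')

lemma norm_le_shift:
  fixes u :: complex
  assumes "Re u \<ge> 0" "d \<ge> 0"
  shows "norm u \<le> norm (u + of_real d)"
proof -
  have "(Re u)\<^sup>2 \<le> (Re u + d)\<^sup>2" using assms by (intro power_mono) auto
  then have "(Re u)\<^sup>2 + (Im u)\<^sup>2 \<le> (Re (u + of_real d))\<^sup>2 + (Im (u + of_real d))\<^sup>2" by simp
  then show ?thesis unfolding cmod_def by (rule real_sqrt_le_mono)
qed

lemma norm_poch_mono:
  fixes w :: complex
  assumes "Re w \<ge> 0" "d \<ge> 0"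
  shows "norm (pochhammer w k) \<le> norm (pochhammer (w + of_real d) k)"
proof -
  have "norm (pochhammer w k) = (\<Prod>i\<in>{0..<k}. norm (w + of_nat i))"
    by (simp add: pochhammer_prod prod_norm)
  also have "\<dots> \<le> (\<Prod>i\<in>{0..<k}. norm (w + of_real d + of_nat i))"
  proof (intro prod_mono conjI)
    fix i assume "i \<in> {0..<k}"
    have "norm (w + of_nat i) \<le> norm ((w + of_nat i) + of_real d)"
      using assms by (intro norm_le_shift) auto
    then show "norm (w + of_nat i) \<le> norm (w + of_real d + of_nat i)" by (simp add: add_ac)
  qed auto
  also have "\<dots> = norm (pochhammer (w + of_real d) k)"
    by (simp add: pochhammer_prod prod_norm)
  finally show ?thesis .
qed

lemma gterm_Suc:
  "gterm a b c (Suc k) = a * b / c * (gterm (a + 1) (b + 1) (c + 1) k / of_nat (Suc k))"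
  by (simp add: gterm_def pochhammer_rec fact_Suc field_simps del: of_nat_Suc)

lemma gterm_0 [simp]: "gterm a b c 0 = 1"
  by (simp add: gterm_def)

lemma gauss_tail:
  fixes a b c :: complex
  shows "(\<lambda>m. suminf (gterm a b (c + of_nat m))) \<longlonglongrightarrow> 1"
proof -
  define m0 where "m0 = nat \<lceil>\<bar>Re c\<bar> + \<bar>Re a\<bar> + \<bar>Re b\<bar> + 2\<rceil>"
  have m0: "real m0 \<ge> \<bar>Re c\<bar> + \<bar>Re a\<bar> + \<bar>Re b\<bar> + 2" unfolding m0_def by linarith
  define c0 where "c0 = c + of_nat m0 + 1"
  have c0: "c0 \<notin> \<int>\<^sub>\<le>\<^sub>0" using m0 unfolding c0_def by (intro Re_pos_not_nonpos_Int) auto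
  have Rc0: "Re c0 \<ge> 0" using m0 unfolding c0_def by auto
  have r0: "Re (c0 - (a + 1) - (b + 1)) > 0" using m0 unfolding c0_def by auto
  define h where "h k = norm (gterm (a + 1) (b + 1) c0 k)" for k
  have hs: "summable h" unfolding h_def by (rule gterm_summable_norm[OF c0 r0])
  define M where "M = suminf h"
  have M0: "M \<ge> 0" unfolding M_def h_def by (intro suminf_nonneg hs[unfolded h_def]) auto
  have bound: "norm (suminf (gterm a b (c + of_nat m)) - 1) \<le> norm (a * b) * M / (Re c + real m)"
    if mm: "m \<ge> m0" for m
  proof -
    define cm where "cm = c + of_nat m"
    have Rcm: "Re cm \<ge> 1" using m0 mm unfolding cm_def by auto
    have cmnz: "norm cm \<ge> Re cm" by (rule complex_Re_le_cmod)
    have cm: "cm \<notin> \<int>\<^sub>\<le>\<^sub>0" using Rcm by (intro Re_pos_not_nonpos_Int) auto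
    have rm: "Re (cm - a - b) > 0" using m0 mm unfolding cm_def by auto
    have sg: "summable (gterm a b cm)"
      using gterm_summable_norm[OF cm rm] summable_norm_cancel by blast
    have "(\<lambda>k. gterm a b cm (Suc k)) sums (suminf (gterm a b cm) - gterm a b cm 0)"
      using summable_sums[OF sg] by (subst sums_Suc_iff) simp
    then have tail: "suminf (gterm a b cm) - 1 = (\<Sum>k. gterm a b cm (Suc k))"
      by (simp add: sums_iff)
    have hb: "norm (gterm a b cm (Suc k)) \<le> norm (a * b) / norm cm * h k" for k
    proof -
      have pmono: "norm (pochhammer c0 k) \<le> norm (pochhammer (cm + 1) k)"
      proof -
        have "cm + 1 = c0 + of_real (real (m - m0))" using mm unfolding cm_def c0_def
          by (simp add: of_nat_diff)
        then show ?thesis using norm_poch_mono[OF Rc0, of "real (m - m0)" k] by simp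
      qed
      have p0: "norm (pochhammer c0 k) > 0" using poch_nz[OF c0] by simp
      have "norm (gterm (a + 1) (b + 1) (cm + 1) k) \<le> h k"
        unfolding h_def gterm_def norm_divide norm_mult
        using poch_nz[OF nonpos_Ints_add1[OF cm], of k]
        by (intro divide_left_mono mult_right_mono pmono mult_pos_pos p0) auto
      then have "norm (gterm (a + 1) (b + 1) (cm + 1) k) / real (Suc k) \<le> h k"
      proof (rule order_trans[rotated])
        show "norm (gterm (a + 1) (b + 1) (cm + 1) k) / real (Suc k) \<le> norm (gterm (a + 1) (b + 1) (cm + 1) k)"
          using divide_left_mono[of 1 "real (Suc k)" "norm (gterm (a + 1) (b + 1) (cm + 1) k)"] by simp
      qed
      then have "norm (a * b / cm) * (norm (gterm (a + 1) (b + 1) (cm + 1) k) / real (Suc k)) \<le> norm (a * b / cm) * h k"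
        by (intro mult_left_mono) auto
      then show ?thesis unfolding gterm_Suc by (simp add: norm_mult norm_divide del: of_nat_Suc)
    qed
    have hs2: "summable (\<lambda>k. norm (a * b) / norm cm * h k)" by (intro summable_mult hs)
    have "norm (suminf (gterm a b cm) - 1) \<le> (\<Sum>k. norm (gterm a b cm (Suc k)))"
      unfolding tail by (rule summable_norm) (rule summable_comparison_test'[OF hs2]; use hb in auto)
    also have "\<dots> \<le> (\<Sum>k. norm (a * b) / norm cm * h k)"
      by (rule suminf_le) (use hb hs2 in \<open>auto intro: summable_comparison_test'[OF hs2]\<close>)
    also have "\<dots> = norm (a * b) / norm cm * M" unfolding M_def by (rule suminf_mult[OF hs])
    also have "\<dots> \<le> norm (a * b) * M / (Re c + real m)"
    proof -
      have "Re c + real m = Re cm" unfolding cm_def by simp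
      then show ?thesis using Rcm cmnz M0
        by (simp add: divide_simps mult_left_mono mult_nonneg_nonneg)
    qed
    finally show ?thesis unfolding cm_def .
  qed
  have "(\<lambda>m. suminf (gterm a b (c + of_nat m)) - 1) \<longlonglongrightarrow> 0"
  proof (rule Lim_null_comparison)
    show "\<forall>\<^sub>F m in sequentially. norm (suminf (gterm a b (c + of_nat m)) - 1) \<le> norm (a * b) * M / (Re c + real m)"
      using eventually_ge_at_top[of m0] by eventually_elim (rule bound)
    show "(\<lambda>m. norm (a * b) * M / (Re c + real m)) \<longlonglongrightarrow> 0" by real_asymp
  qed
  then show ?thesis by (simp add: LIM_zero_iff)
qed

lemma ratio_alg:
  fixes f e1 e2 e3 e4 P1 P2 P3 P4 :: complex
  assumes "f \<noteq> 0" "e1 \<noteq> 0" "e2 \<noteq> 0" "e3 \<noteq> 0" "e4 \<noteq> 0" "e1 * e2 = e3 * e4"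
  shows "(P1 / (f * e1)) * (P2 / (f * e2)) / ((P3 / (f * e3)) * (P4 / (f * e4))) = P1 * P2 / (P3 * P4)"
proof (cases "P3 * P4 = 0")
  case True
  then show ?thesis by auto
next
  case False
  then have "P3 \<noteq> 0" "P4 \<noteq> 0" by auto
  then have "(P1 / (f * e1)) * (P2 / (f * e2)) / ((P3 / (f * e3)) * (P4 / (f * e4))) =
        P1 * P2 / (P3 * P4) * ((e3 * e4) / (e1 * e2))"
    using assms by (simp add: field_simps)
  also have "\<dots> = P1 * P2 / (P3 * P4)" using assms by simp
  finally show ?thesis .
qed

lemma gauss_ratio_lim:
  assumes c: "c \<notin> \<int>\<^sub>\<le>\<^sub>0" and r: "Re (c - a - b) > 0"
  shows "(\<lambda>m. pochhammer (c - a) (Suc m) * pochhammer (c - b) (Suc m) /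
              (pochhammer c (Suc m) * pochhammer (c - a - b) (Suc m)))
         \<longlonglongrightarrow> rGamma (c - a) * rGamma (c - b) / (rGamma c * rGamma (c - a - b))"
proof -
  have cab: "c - a - b \<notin> \<int>\<^sub>\<le>\<^sub>0" using r by (intro Re_pos_not_nonpos_Int) auto
  have nz: "rGamma c * rGamma (c - a - b) \<noteq> 0" using c cab by (simp add: rGamma_eq_zero_iff)
  have lim: "(\<lambda>m. rGamma_series (c - a) m * rGamma_series (c - b) m / (rGamma_series c m * rGamma_series (c - a - b) m))
         \<longlonglongrightarrow> rGamma (c - a) * rGamma (c - b) / (rGamma c * rGamma (c - a - b))"
    using nz by (intro tendsto_intros) auto
  have eq: "rGamma_series (c - a) m * rGamma_series (c - b) m / (rGamma_series c m * rGamma_series (c - a - b) m) =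
        pochhammer (c - a) (Suc m) * pochhammer (c - b) (Suc m) /
              (pochhammer c (Suc m) * pochhammer (c - a - b) (Suc m))" for m
  proof -
    define L where "L = complex_of_real (ln (real m))"
    have e: "exp ((c - a) * L) * exp ((c - b) * L) = exp (c * L) * exp ((c - a - b) * L)"
      by (simp add: exp_add[symmetric] algebra_simps)
    show ?thesis unfolding rGamma_series_def L_def[symmetric] Suc_eq_plus1
      by (rule ratio_alg) (use e in auto)
  qed
  show ?thesis using lim unfolding eq .
qed

theorem gauss_sum:
  assumes c: "c \<notin> \<int>\<^sub>\<le>\<^sub>0" and r: "Re (c - a - b) > 0"
  shows "gterm a b c sums (Gamma c * Gamma (c - a - b) * rGamma (c - a) * rGamma (c - b))"
proof -
  have cab: "c - a - b \<notin> \<int>\<^sub>\<le>\<^sub>0" using r by (intro Re_pos_not_nonpos_Int) auto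
  have sg: "summable (gterm a b c)"
    using gterm_summable_norm[OF c r] summable_norm_cancel by blast
  define R where "R m = pochhammer (c - a) (Suc m) * pochhammer (c - b) (Suc m) /
              (pochhammer c (Suc m) * pochhammer (c - a - b) (Suc m))" for m
  have eq: "suminf (gterm a b c) = R m * suminf (gterm a b (c + of_nat (Suc m)))" for m
  proof -
    have "suminf (gterm a b c) * (pochhammer c (Suc m) * pochhammer (c - a - b) (Suc m)) =
         pochhammer (c - a) (Suc m) * pochhammer (c - b) (Suc m) * suminf (gterm a b (c + of_nat (Suc m)))"
      by (rule gauss_iter[OF c r])
    moreover have "pochhammer c (Suc m) * pochhammer (c - a - b) (Suc m) \<noteq> 0"
      using poch_nz[OF c] poch_nz[OF cab] by simp
    ultimately show ?thesis unfolding R_def by (simp add: field_simps)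
  qed
  have "(\<lambda>m. R m * suminf (gterm a b (c + of_nat (Suc m))))
          \<longlonglongrightarrow> rGamma (c - a) * rGamma (c - b) / (rGamma c * rGamma (c - a - b)) * 1"
    unfolding R_def
    by (intro tendsto_mult gauss_ratio_lim[OF c r] LIMSEQ_Suc[OF gauss_tail])
  moreover have "(\<lambda>m. R m * suminf (gterm a b (c + of_nat (Suc m)))) = (\<lambda>m. suminf (gterm a b c))"
    using eq by simp
  ultimately have "(\<lambda>m. suminf (gterm a b c)) \<longlonglongrightarrow> rGamma (c - a) * rGamma (c - b) / (rGamma c * rGamma (c - a - b))"
    by simp
  then have "suminf (gterm a b c) = rGamma (c - a) * rGamma (c - b) / (rGamma c * rGamma (c - a - b))"
    by (simp add: LIMSEQ_const_iff)
  also have "\<dots> = Gamma c * Gamma (c - a - b) * rGamma (c - a) * rGamma (c - b)"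
    by (simp add: Gamma_def field_simps)
  finally show ?thesis using summable_sums[OF sg] by simp
qed



lemma circle_Re_lt:
  fixes z :: complex
  assumes "norm z = 1" "z \<noteq> 1"
  shows "Re z < 1"
proof (rule ccontr)
  assume "\<not> Re z < 1"
  moreover have "Re z \<le> 1" using complex_Re_le_cmod[of z] assms by simp
  ultimately have R: "Re z = 1" by simp
  have "(Re z)\<^sup>2 + (Im z)\<^sup>2 = 1" using assms(1) by (simp add: cmod_def)
  with R have "Im z = 0" by simp
  with R have "z = 1" by (simp add: complex_eq_iff)
  with assms show False by simp
qed

lemma one_minus_circle_not_nonpos:
  fixes z :: complex
  assumes "norm z = 1" "z \<noteq> 1"
  shows "1 - z \<notin> \<real>\<^sub>\<le>\<^sub>0"
  using circle_Re_lt[OF assms] by (simp add: complex_nonpos_Reals_iff)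

lemma alpha_summable:
  fixes A :: complex
  assumes "Re A < 0"
  shows "summable (\<lambda>j. norm (pochhammer A j / fact j))"
proof -
  obtain K where K: "K > 0" "\<And>n. norm (pochhammer A n) \<le> K * fact n * (real n + 1) powr (Re A - 1)"
    using poch_bound_upper by blast
  have "summable (\<lambda>j::nat. K * (real j + 1) powr (Re A - 1))"
    using assms by (intro summable_mult summable_powr_shift) simp
  moreover have "norm (norm (pochhammer A j / fact j)) \<le> K * (real j + 1) powr (Re A - 1)" for j
  proof -
    have "norm (pochhammer A j / fact j) = norm (pochhammer A j) / fact j" by (simp add: norm_divide)
    also have "\<dots> \<le> K * fact j * (real j + 1) powr (Re A - 1) / fact j"
      by (intro divide_right_mono K(2)) auto
    also have "\<dots> = K * (real j + 1) powr (Re A - 1)" by simp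
    finally show ?thesis by simp
  qed
  ultimately show ?thesis by (rule summable_comparison_test'[where N=0])
qed

lemma binom_boundary:
  fixes A z :: complex
  assumes A: "Re A < 0" and z: "norm z = 1" "z \<noteq> 1"
  shows "(\<lambda>j. pochhammer A j / fact j * z ^ j) sums (1 - z) powr (-A)"
proof -
  define \<alpha> where "\<alpha> j = pochhammer A j / fact j" for j
  have as: "summable (\<lambda>j. norm (\<alpha> j))" unfolding \<alpha>_def by (rule alpha_summable[OF A])
  have inner: "(\<lambda>j. \<alpha> j * w ^ j) sums (1 - w) powr (-A)" if "norm w < 1" for w
  proof -
    have "norm (-w) < 1" using that by simp
    from gen_binomial_complex[OF this, of "-A"]
    have "(\<lambda>n. ((-A) gchoose n) * (-w) ^ n) sums (1 + - w) powr (-A)" .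
    moreover have "((-A) gchoose n) * (-w) ^ n = \<alpha> n * w ^ n" for n
    proof -
      have "((-A) gchoose n) * (-w) ^ n = ((-1) ^ n * (-w) ^ n) * (pochhammer A n / fact n)"
        by (simp only: gbinomial_pochhammer minus_minus times_divide_eq_right times_divide_eq_left mult_ac)
      also have "(-1) ^ n * (-w) ^ n = w ^ n" by (simp add: power_mult_distrib[symmetric])
      finally show ?thesis by (simp add: \<alpha>_def mult_ac)
    qed
    ultimately show ?thesis by simp
  qed
  define f where "f w = (\<Sum>j. \<alpha> j * w ^ j)" for w
  have cont: "continuous_on (cball 0 1) f"
  proof -
    have ul: "uniform_limit (cball 0 1) (\<lambda>n w. \<Sum>i<n. \<alpha> i * w ^ i) (\<lambda>w. \<Sum>i. \<alpha> i * w ^ i) sequentially"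
    proof (rule Weierstrass_m_test[OF _ as])
      fix n and w :: complex assume "w \<in> cball 0 1"
      then have "norm w \<le> 1" by simp
      then have "norm (w ^ n) \<le> 1" by (simp add: norm_power power_le_one)
      then show "norm (\<alpha> n * w ^ n) \<le> norm (\<alpha> n)"
        by (simp add: norm_mult mult_left_le)
    qed
    show ?thesis unfolding f_def
      by (rule uniform_limit_theorem[OF _ ul]) (auto intro!: continuous_intros always_eventually)
  qed
  define zm where "zm m = (1 - 1 / (real m + 2)) *\<^sub>R z" for m :: nat
  have zm_norm: "norm (zm m) < 1" for m
    using z by (simp add: zm_def norm_scaleR)
  have zm_lim: "zm \<longlonglongrightarrow> z"
  proof -
    have "(\<lambda>m. (1 - 1 / (real m + 2)) *\<^sub>R z) \<longlonglongrightarrow> (1 - 0) *\<^sub>R z"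
      by (intro tendsto_intros) real_asymp
    then show ?thesis unfolding zm_def[abs_def] by simp
  qed
  have L1: "(\<lambda>m. f (zm m)) \<longlonglongrightarrow> f z"
    by (rule continuous_on_tendsto_compose[OF cont zm_lim]) (use z zm_norm in \<open>auto intro!: always_eventually less_imp_le\<close>)
  have L2: "(\<lambda>m. f (zm m)) \<longlonglongrightarrow> (1 - z) powr (-A)"
  proof -
    have "(\<lambda>m. (1 - zm m) powr (-A)) \<longlonglongrightarrow> (1 - z) powr (-A)"
      by (rule tendsto_powr_complex[OF one_minus_circle_not_nonpos[OF z]]) (intro tendsto_intros zm_lim)+
    moreover have "f (zm m) = (1 - zm m) powr (-A)" for m
      unfolding f_def using inner[OF zm_norm[of m]] by (simp add: sums_iff)
    ultimately show ?thesis by simp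
  qed
  have "f z = (1 - z) powr (-A)" using LIMSEQ_unique[OF L1 L2] .
  moreover have "summable (\<lambda>j. \<alpha> j * z ^ j)"
  proof (rule summable_norm_cancel, rule summable_comparison_test'[OF as])
    fix n show "norm (norm (\<alpha> n * z ^ n)) \<le> norm (\<alpha> n)" using z by (simp add: norm_mult norm_power)
  qed
  ultimately show ?thesis unfolding f_def \<alpha>_def by (metis summable_sums)
qed



lemma nat_norm_has_sum:
  fixes f :: "nat \<Rightarrow> complex"
  assumes "summable (\<lambda>j. norm (f j))" "f sums a"
  shows "(f has_sum a) UNIV"
  using assms by (rule norm_summable_imp_has_sum)

lemma has_sum_prod_nat:
  fixes f g :: "nat \<Rightarrow> complex"
  assumes fs: "summable (\<lambda>j. norm (f j))" "f sums a"
      and gs: "summable (\<lambda>k. norm (g k))" "g sums b"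
  shows "((\<lambda>(j,k). f j * g k) has_sum (a * b)) (UNIV \<times> UNIV)"
proof (rule has_sum_SigmaI)
  have fh: "(f has_sum a) UNIV" by (rule nat_norm_has_sum[OF fs])
  have gh: "(g has_sum b) UNIV" by (rule nat_norm_has_sum[OF gs])
  show "((\<lambda>k. case (j, k) of (j, k) \<Rightarrow> f j * g k) has_sum f j * b) UNIV" for j
    using has_sum_cmult_right[OF gh, of "f j"] by simp
  show "((\<lambda>j. f j * b) has_sum a * b) UNIV"
    using has_sum_cmult_left[OF fh] by simp
  have gn: "(\<lambda>k. norm (g k)) summable_on UNIV"
    using gs(1) by (simp add: summable_on_UNIV_nonneg_real_iff)
  have fn: "(\<lambda>j. norm (f j)) summable_on UNIV"
    using fs(1) by (simp add: summable_on_UNIV_nonneg_real_iff)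
  have "(\<lambda>x. norm (case x of (j,k) \<Rightarrow> f j * g k)) summable_on (Sigma UNIV (\<lambda>_. UNIV))"
  proof (rule iffD2[OF Infinite_Sum.abs_summable_on_Sigma_iff], intro conjI ballI)
    fix j :: nat
    show "(\<lambda>k. norm (case (j, k) of (j, k) \<Rightarrow> f j * g k)) summable_on UNIV"
      using summable_on_cmult_right[OF gn, of "norm (f j)"] by (simp only: prod.case norm_mult)
  next
    have "(\<lambda>j. norm (norm (f j) * infsum (\<lambda>k. norm (g k)) UNIV)) summable_on UNIV"
    proof -
      have nn: "infsum (\<lambda>k. norm (g k)) UNIV \<ge> 0" by (intro infsum_nonneg) auto
      have "(\<lambda>j. norm (f j) * infsum (\<lambda>k. norm (g k)) UNIV) summable_on UNIV"
        by (rule summable_on_cmult_left[OF fn])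
      moreover have "norm (norm (f j) * infsum (\<lambda>k. norm (g k)) UNIV) = norm (f j) * infsum (\<lambda>k. norm (g k)) UNIV" for j
        using nn by (simp add: abs_mult)
      ultimately show ?thesis by (simp only:)
    qed
    moreover have "(\<Sum>\<^sub>\<infinity>k. norm (case (j, k) of (j, k) \<Rightarrow> f j * g k)) = norm (f j) * infsum (\<lambda>k. norm (g k)) UNIV" for j
      unfolding prod.case norm_mult by (rule infsum_cmult_right')
    ultimately show "(\<lambda>j. norm (\<Sum>\<^sub>\<infinity>k. norm (case (j, k) of (j, k) \<Rightarrow> f j * g k))) summable_on UNIV"
      by (simp only:)
  qed
  then show "(\<lambda>(j,k). f j * g k) summable_on Sigma UNIV (\<lambda>_. UNIV)"
    by (rule abs_summable_summable)
qed


definition uu :: "complex \<Rightarrow> complex \<Rightarrow> int \<Rightarrow> complex" where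
  "uu A C n = (if n \<ge> 0 then pochhammer A (nat n) / pochhammer C (nat n)
               else pochhammer (1 - C) (nat (-n)) / pochhammer (1 - A) (nat (-n)))"

lemma fact_poch_split: "(fact (m + k) :: complex) = fact m * pochhammer (of_nat m + 1) k"
  using pochhammer_product'[of "1::complex" m k] by (simp add: pochhammer_fact add_ac)

lemma inner_pos:
  fixes A C :: complex
  assumes A: "1 - A \<notin> \<int>\<^sub>\<le>\<^sub>0" and C: "C \<notin> \<int>\<^sub>\<le>\<^sub>0" and r: "Re (C - A) > 0"
  shows "(\<lambda>k. pochhammer A (m + k) / fact (m + k) * (pochhammer (1 - C) k / fact k)) sums
           (Gamma (C - A) * rGamma (1 - A) * rGamma C * uu A C (int m))"
    and "summable (\<lambda>k. norm (pochhammer A (m + k) / fact (m + k) * (pochhammer (1 - C) k / fact k)))"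
proof -
  have c: "of_nat m + 1 \<notin> (\<int>\<^sub>\<le>\<^sub>0 :: complex set)" by (intro Re_pos_not_nonpos_Int) simp
  have r': "Re (of_nat m + 1 - (A + of_nat m) - (1 - C)) > 0" using r by simp
  have G: "gterm (A + of_nat m) (1 - C) (of_nat m + 1) sums
      (Gamma (of_nat m + 1) * Gamma (of_nat m + 1 - (A + of_nat m) - (1 - C)) *
       rGamma (of_nat m + 1 - (A + of_nat m)) * rGamma (of_nat m + 1 - (1 - C)))"
    by (rule gauss_sum[OF c r'])
  have e1: "of_nat m + 1 - (A + of_nat m) - (1 - C) = C - A" by simp
  have e2: "of_nat m + 1 - (A + of_nat m) = 1 - A" by simp
  have e3: "of_nat m + 1 - (1 - C) = C + of_nat m" by simp
  have e4: "Gamma (of_nat m + 1) = (fact m :: complex)" using Gamma_fact[of m] by (simp add: add_ac)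
  have pc: "pochhammer C m \<noteq> 0" by (rule poch_nz[OF C])
  have e5: "rGamma (C + of_nat m) = rGamma C / pochhammer C m"
    using pochhammer_rGamma[of C m] pc by (simp add: field_simps)
  have G': "gterm (A + of_nat m) (1 - C) (of_nat m + 1) sums
      (fact m * Gamma (C - A) * rGamma (1 - A) * (rGamma C / pochhammer C m))"
    using G[unfolded e1] unfolding e2 e3 e4 e5 .
  have tm: "pochhammer A (m + k) / fact (m + k) * (pochhammer (1 - C) k / fact k) =
        pochhammer A m / fact m * gterm (A + of_nat m) (1 - C) (of_nat m + 1) k" for k
    unfolding pochhammer_product'[of A m k] fact_poch_split[of m k] gterm_def by (simp add: field_simps)
  have "(\<lambda>k. pochhammer A m / fact m * gterm (A + of_nat m) (1 - C) (of_nat m + 1) k) sums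
        (pochhammer A m / fact m * (fact m * Gamma (C - A) * rGamma (1 - A) * (rGamma C / pochhammer C m)))"
    by (rule sums_mult[OF G'])
  moreover have "pochhammer A m / fact m * (fact m * Gamma (C - A) * rGamma (1 - A) * (rGamma C / pochhammer C m))
      = Gamma (C - A) * rGamma (1 - A) * rGamma C * uu A C (int m)"
    by (simp add: uu_def field_simps)
  ultimately show "(\<lambda>k. pochhammer A (m + k) / fact (m + k) * (pochhammer (1 - C) k / fact k)) sums
           (Gamma (C - A) * rGamma (1 - A) * rGamma C * uu A C (int m))" unfolding tm by simp
  show "summable (\<lambda>k. norm (pochhammer A (m + k) / fact (m + k) * (pochhammer (1 - C) k / fact k)))"
    unfolding tm norm_mult by (intro summable_mult gterm_summable_norm[OF c r'])
qed

lemma inner_neg: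
  fixes A C :: complex
  assumes A: "1 - A \<notin> \<int>\<^sub>\<le>\<^sub>0" and C: "C \<notin> \<int>\<^sub>\<le>\<^sub>0" and r: "Re (C - A) > 0"
  shows "(\<lambda>k. pochhammer A k / fact k * (pochhammer (1 - C) (m + k) / fact (m + k))) sums
           (Gamma (C - A) * rGamma (1 - A) * rGamma C * (pochhammer (1 - C) m / pochhammer (1 - A) m))"
    and "summable (\<lambda>k. norm (pochhammer A k / fact k * (pochhammer (1 - C) (m + k) / fact (m + k))))"
proof -
  have c: "of_nat m + 1 \<notin> (\<int>\<^sub>\<le>\<^sub>0 :: complex set)" by (intro Re_pos_not_nonpos_Int) simp
  have r': "Re (of_nat m + 1 - A - (1 - C + of_nat m)) > 0" using r by simp
  have G: "gterm A (1 - C + of_nat m) (of_nat m + 1) sums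
      (Gamma (of_nat m + 1) * Gamma (of_nat m + 1 - A - (1 - C + of_nat m)) *
       rGamma (of_nat m + 1 - A) * rGamma (of_nat m + 1 - (1 - C + of_nat m)))"
    by (rule gauss_sum[OF c r'])
  have e1: "of_nat m + 1 - A - (1 - C + of_nat m) = C - A" by simp
  have e2: "of_nat m + 1 - A = (1 - A) + of_nat m" by simp
  have e3: "of_nat m + 1 - (1 - C + of_nat m) = C" by simp
  have e4: "Gamma (of_nat m + 1) = (fact m :: complex)" using Gamma_fact[of m] by (simp add: add_ac)
  have pa: "pochhammer (1 - A) m \<noteq> 0" by (rule poch_nz[OF A])
  have e5: "rGamma ((1 - A) + of_nat m) = rGamma (1 - A) / pochhammer (1 - A) m"
    using pochhammer_rGamma[of "1 - A" m] pa by (simp add: field_simps)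
  have G': "gterm A (1 - C + of_nat m) (of_nat m + 1) sums
      (fact m * Gamma (C - A) * (rGamma (1 - A) / pochhammer (1 - A) m) * rGamma C)"
    using G[unfolded e1 e3] unfolding e2 e4 e5 .
  have tm: "pochhammer A k / fact k * (pochhammer (1 - C) (m + k) / fact (m + k)) =
        pochhammer (1 - C) m / fact m * gterm A (1 - C + of_nat m) (of_nat m + 1) k" for k
    unfolding pochhammer_product'[of "1 - C" m k] fact_poch_split[of m k] gterm_def by (simp add: field_simps)
  have "(\<lambda>k. pochhammer (1 - C) m / fact m * gterm A (1 - C + of_nat m) (of_nat m + 1) k) sums
        (pochhammer (1 - C) m / fact m * (fact m * Gamma (C - A) * (rGamma (1 - A) / pochhammer (1 - A) m) * rGamma C))"
    by (rule sums_mult[OF G'])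
  moreover have "pochhammer (1 - C) m / fact m * (fact m * Gamma (C - A) * (rGamma (1 - A) / pochhammer (1 - A) m) * rGamma C)
      = Gamma (C - A) * rGamma (1 - A) * rGamma C * (pochhammer (1 - C) m / pochhammer (1 - A) m)"
    by (simp add: field_simps)
  ultimately show "(\<lambda>k. pochhammer A k / fact k * (pochhammer (1 - C) (m + k) / fact (m + k))) sums
           (Gamma (C - A) * rGamma (1 - A) * rGamma C * (pochhammer (1 - C) m / pochhammer (1 - A) m))"
    unfolding tm by (simp add: mult_ac)
  show "summable (\<lambda>k. norm (pochhammer A k / fact k * (pochhammer (1 - C) (m + k) / fact (m + k))))"
    unfolding tm norm_mult by (intro summable_mult gterm_summable_norm[OF c r'])
qed



definition Fcl :: "complex \<Rightarrow> complex \<Rightarrow> complex \<Rightarrow> complex" where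
  "Fcl A C z = Gamma C * Gamma (1 - A) / Gamma (C - A) * (1 - z) powr (-A) * (1 - 1 / z) powr (C - 1)"

lemma base_case:
  fixes A C z :: complex
  assumes A: "Re A < 0" and C: "Re C > 1" and z: "norm z = 1" "z \<noteq> 1"
  shows "((\<lambda>n. uu A C n * z powi n) has_sum Fcl A C z) UNIV"
proof -
  have A1: "1 - A \<notin> \<int>\<^sub>\<le>\<^sub>0" using A by (intro Re_pos_not_nonpos_Int) simp
  have C1: "C \<notin> \<int>\<^sub>\<le>\<^sub>0" using C by (intro Re_pos_not_nonpos_Int) simp
  have r: "Re (C - A) > 0" using A C by simp
  have z0: "z \<noteq> 0" using z by auto
  define w where "w = 1 / z"
  have w: "norm w = 1" "w \<noteq> 1" using z by (auto simp: w_def norm_divide)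
  have zw: "z * w = 1" using z0 by (simp add: w_def)
  define \<alpha> where "\<alpha> j = pochhammer A j / fact j" for j
  define \<beta> where "\<beta> k = pochhammer (1 - C) k / fact k" for k
  define \<kappa> where "\<kappa> = Gamma (C - A) * rGamma (1 - A) * rGamma C"
  have CA: "C - A \<notin> \<int>\<^sub>\<le>\<^sub>0" using r by (intro Re_pos_not_nonpos_Int) simp
  have \<kappa>0: "\<kappa> \<noteq> 0" unfolding \<kappa>_def using A1 C1 CA
    by (simp add: Gamma_eq_zero_iff rGamma_eq_zero_iff)
  have P: "(\<lambda>j. \<alpha> j * z ^ j) sums (1 - z) powr (-A)"
    unfolding \<alpha>_def by (rule binom_boundary[OF A z])
  have Pn: "summable (\<lambda>j. norm (\<alpha> j * z ^ j))"
  proof -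
    have "(\<lambda>j. norm (\<alpha> j * z ^ j)) = (\<lambda>j. norm (\<alpha> j))" using z by (simp add: norm_mult norm_power)
    then show ?thesis unfolding \<alpha>_def using alpha_summable[OF A] by simp
  qed
  have A': "Re (1 - C) < 0" using C by simp
  have Q: "(\<lambda>k. \<beta> k * w ^ k) sums (1 - w) powr (-(1 - C))"
    unfolding \<beta>_def by (rule binom_boundary[OF A' w])
  have Qn: "summable (\<lambda>k. norm (\<beta> k * w ^ k))"
  proof -
    have "(\<lambda>k. norm (\<beta> k * w ^ k)) = (\<lambda>k. norm (\<beta> k))" using w by (simp add: norm_mult norm_power)
    then show ?thesis unfolding \<beta>_def using alpha_summable[OF A'] by simp
  qed
  define PQ where "PQ = (1 - z) powr (-A) * (1 - w) powr (-(1 - C))"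
  have prod: "((\<lambda>(j,k). (\<alpha> j * z ^ j) * (\<beta> k * w ^ k)) has_sum PQ) (UNIV \<times> UNIV)"
    unfolding PQ_def by (rule has_sum_prod_nat[OF Pn P Qn Q])
  define H where "H n k = z powi n * (if n \<ge> 0 then \<alpha> (nat n + k) * \<beta> k else \<alpha> k * \<beta> (nat (-n) + k))"
    for n :: int and k :: nat
  have reidx: "((\<lambda>(n,k). H n k) has_sum PQ) (UNIV \<times> UNIV)"
  proof -
    have "((\<lambda>(n,k). H n k) has_sum PQ) (UNIV \<times> UNIV) =
          ((\<lambda>(j,k). (\<alpha> j * z ^ j) * (\<beta> k * w ^ k)) has_sum PQ) (UNIV \<times> UNIV)"
    proof (rule has_sum_reindex_bij_witness[where j = "\<lambda>(n,k). if n \<ge> 0 then (nat n + k, k) else (k, nat (-n) + k)"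
                                               and i = "\<lambda>(a,b). (int a - int b, min a b)"])
      fix p :: "int \<times> nat"
      obtain n k where p: "p = (n, k)" by (cases p)
      show "(\<lambda>(a,b). (int a - int b, min a b)) ((\<lambda>(n,k). if n \<ge> 0 then (nat n + k, k) else (k, nat (-n) + k)) p) = p"
        unfolding p by auto
      show "(\<lambda>(n,k). if n \<ge> 0 then (nat n + k, k) else (k, nat (-n) + k)) p \<in> UNIV \<times> UNIV" by simp
      show "(\<lambda>(j,k). (\<alpha> j * z ^ j) * (\<beta> k * w ^ k)) ((\<lambda>(n,k). if n \<ge> 0 then (nat n + k, k) else (k, nat (-n) + k)) p)
            = (\<lambda>(n,k). H n k) p"
      proof (cases "n \<ge> 0")
        case True
        have "z ^ (nat n + k) * w ^ k = z ^ nat n * (z * w) ^ k" by (simp add: power_add power_mult_distrib)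
        then show ?thesis unfolding p H_def using True zw by (simp add: power_int_def mult_ac)
      next
        case False
        have "z ^ k * w ^ (nat (-n) + k) = w ^ nat (-n) * (z * w) ^ k" by (simp add: power_add power_mult_distrib mult_ac)
        moreover have "z powi n = w ^ nat (-n)" using False by (simp add: power_int_def w_def power_one_over power_inverse divide_inverse)
        ultimately show ?thesis unfolding p H_def using False zw by (simp add: mult_ac)
      qed
    next
      fix q :: "nat \<times> nat"
      obtain a b where q: "q = (a, b)" by (cases q)
      show "(\<lambda>(n,k). if n \<ge> 0 then (nat n + k, k) else (k, nat (-n) + k)) ((\<lambda>(a,b). (int a - int b, min a b)) q) = q"
        unfolding q by auto
      show "(\<lambda>(a,b). (int a - int b, min a b)) q \<in> UNIV \<times> UNIV" by simp
    qed simp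
    then show ?thesis using prod by simp
  qed
  have inner: "((\<lambda>k. H n k) has_sum (z powi n * (\<kappa> * uu A C n))) UNIV" for n
  proof (cases "n \<ge> 0")
    case True
    define m where "m = nat n"
    have n: "n = int m" using True by (simp add: m_def)
    have "((\<lambda>k. \<alpha> (m + k) * \<beta> k) has_sum (\<kappa> * uu A C (int m))) UNIV"
      unfolding \<alpha>_def \<beta>_def \<kappa>_def
      by (rule nat_norm_has_sum[OF inner_pos(2)[OF A1 C1 r] inner_pos(1)[OF A1 C1 r]])
    from has_sum_cmult_right[OF this, of "z powi n"]
    show ?thesis unfolding H_def using True by (simp add: n)
  next
    case False
    define m where "m = nat (-n)"
    have n: "uu A C n = pochhammer (1 - C) m / pochhammer (1 - A) m" using False by (simp add: uu_def m_def)
    have "((\<lambda>k. \<alpha> k * \<beta> (m + k)) has_sum (\<kappa> * uu A C n)) UNIV"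
      unfolding \<alpha>_def \<beta>_def \<kappa>_def n
      by (rule nat_norm_has_sum[OF inner_neg(2)[OF A1 C1 r] inner_neg(1)[OF A1 C1 r]])
    from has_sum_cmult_right[OF this, of "z powi n"]
    show ?thesis unfolding H_def using False by (simp add: m_def)
  qed
  have "((\<lambda>n. z powi n * (\<kappa> * uu A C n)) has_sum PQ) UNIV"
    by (rule has_sum_Sigma'[where B = "\<lambda>_. UNIV" and f = "\<lambda>(n,k). H n k"]) (use reidx inner in auto)
  from has_sum_cmult_right[OF this, of "inverse \<kappa>"]
  have "((\<lambda>n. uu A C n * z powi n) has_sum (inverse \<kappa> * PQ)) UNIV"
    using \<kappa>0 by (simp add: field_simps)
  moreover have "inverse \<kappa> * PQ = Fcl A C z"
    unfolding Fcl_def PQ_def \<kappa>_def w_def using A1 C1 CA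
    by (simp add: rGamma_inverse_Gamma Gamma_eq_zero_iff field_simps)
  ultimately show ?thesis by simp
qed



lemma ratio_bound:
  fixes x y :: complex
  assumes y: "y \<notin> \<int>\<^sub>\<le>\<^sub>0"
  obtains K where "K > 0" "\<And>m. norm (pochhammer x m / pochhammer y m) \<le> K * (real m + 1) powr (Re x - Re y)"
proof -
  obtain Kx where Kx: "Kx > 0" "\<And>n. norm (pochhammer x n) \<le> Kx * fact n * (real n + 1) powr (Re x - 1)"
    using poch_bound_upper by blast
  obtain ky where ky: "ky > 0" "\<And>n. ky * fact n * (real n + 1) powr (Re y - 1) \<le> norm (pochhammer y n)"
    using poch_bound_lower[OF y] by blast
  have "norm (pochhammer x m / pochhammer y m) \<le> (Kx / ky) * (real m + 1) powr (Re x - Re y)" for m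
  proof -
    have fpos: "(fact m :: real) > 0" by simp
    have yp: "(real m + 1) > 0" by simp
    have "norm (pochhammer x m / pochhammer y m) = norm (pochhammer x m) / norm (pochhammer y m)"
      by (simp add: norm_divide)
    also have "\<dots> \<le> (Kx * fact m * (real m + 1) powr (Re x - 1)) / (ky * fact m * (real m + 1) powr (Re y - 1))"
      using Kx ky by (intro frac_le mult_pos_pos) auto
    also have "\<dots> = (Kx / ky) * ((real m + 1) powr (Re x - 1) / (real m + 1) powr (Re y - 1))"
      using fpos ky by (simp add: field_simps)
    also have "(real m + 1) powr (Re x - 1) / (real m + 1) powr (Re y - 1) = (real m + 1) powr (Re x - Re y)"
      by (simp add: powr_diff[symmetric])
    finally show ?thesis .
  qed
  moreover have "Kx / ky > 0" using Kx ky by simp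
  ultimately show ?thesis using that by blast
qed

lemma uu_norm_bound:
  fixes A C :: complex
  assumes A1: "1 - A \<notin> \<int>\<^sub>\<le>\<^sub>0" and C1: "C \<notin> \<int>\<^sub>\<le>\<^sub>0"
  obtains K where "K > 0" "\<And>n. norm (uu A C n) \<le> K * (real (nat \<bar>n\<bar>) + 1) powr (Re A - Re C)"
proof -
  obtain K1 where K1: "K1 > 0" "\<And>m. norm (pochhammer A m / pochhammer C m) \<le> K1 * (real m + 1) powr (Re A - Re C)"
    using ratio_bound[OF C1] by blast
  obtain K2 where K2: "K2 > 0" "\<And>m. norm (pochhammer (1 - C) m / pochhammer (1 - A) m) \<le> K2 * (real m + 1) powr (Re (1 - C) - Re (1 - A))"
    using ratio_bound[OF A1] by blast
  have "norm (uu A C n) \<le> (K1 + K2) * (real (nat \<bar>n\<bar>) + 1) powr (Re A - Re C)" for n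
  proof (cases "n \<ge> 0")
    case True
    then have "norm (uu A C n) \<le> K1 * (real (nat \<bar>n\<bar>) + 1) powr (Re A - Re C)"
      using K1(2)[of "nat n"] by (simp add: uu_def)
    also have "\<dots> \<le> (K1 + K2) * (real (nat \<bar>n\<bar>) + 1) powr (Re A - Re C)"
      using K2 by (intro mult_right_mono) auto
    finally show ?thesis .
  next
    case False
    then have "norm (uu A C n) \<le> K2 * (real (nat \<bar>n\<bar>) + 1) powr (Re A - Re C)"
      using K2(2)[of "nat (-n)"] by (simp add: uu_def)
    also have "\<dots> \<le> (K1 + K2) * (real (nat \<bar>n\<bar>) + 1) powr (Re A - Re C)"
      using K1 by (intro mult_right_mono) auto
    finally show ?thesis .
  qed
  moreover have "K1 + K2 > 0" using K1 K2 by simp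
  ultimately show ?thesis using that by blast
qed

lemma has_sum_int_split:
  fixes f :: "int \<Rightarrow> 'a::topological_comm_monoid_add"
  assumes "((\<lambda>m::nat. f (int m)) has_sum a) UNIV" "((\<lambda>m::nat. f (- int (Suc m))) has_sum b) UNIV"
  shows "(f has_sum (a + b)) UNIV"
proof -
  have i1: "inj (\<lambda>m::nat. int m)" by (auto simp: inj_def)
  have i2: "inj (\<lambda>m::nat. - int (Suc m))" by (auto simp: inj_def)
  have h1: "(f has_sum a) (range (\<lambda>m::nat. int m))"
    using has_sum_reindex[OF i1, of f a] assms(1) by (simp add: comp_def)
  have h2: "(f has_sum b) (range (\<lambda>m::nat. - int (Suc m)))"
    using has_sum_reindex[OF i2, of f b] assms(2) by (simp add: comp_def)
  have r1: "range (\<lambda>m::nat. int m) = {n. n \<ge> 0}"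
    by (auto intro: image_eqI[where x="nat _"])
  have r2: "range (\<lambda>m::nat. - int (Suc m)) = {n. n < 0}"
  proof (auto)
    fix n :: int assume "n < 0"
    then show "n \<in> range (\<lambda>m. - 1 - int m)"
      by (intro image_eqI[where x="nat (- n - 1)"]) auto
  qed
  have "(f has_sum (a + b)) ({n. n \<ge> 0} \<union> {n. n < 0})"
    using has_sum_Un_disjoint[OF h1 h2] unfolding r1 r2 by (metis (mono_tags) disjoint_iff mem_Collect_eq not_le)
  moreover have "{n::int. n \<ge> 0} \<union> {n. n < 0} = UNIV" by auto
  ultimately show ?thesis by simp
qed

lemma powr_int_summable:
  fixes t :: real
  assumes "t < -1"
  shows "(\<lambda>n::int. (real (nat \<bar>n\<bar>) + 1) powr t) summable_on UNIV"
proof -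
  have s1: "summable (\<lambda>m::nat. (real m + 1) powr t)" by (rule summable_powr_shift[OF assms])
  have s2: "summable (\<lambda>m::nat. (real (Suc m) + 1) powr t)" using s1 by (subst summable_Suc_iff)
  have h1: "((\<lambda>m::nat. (real (nat \<bar>int m\<bar>) + 1) powr t) has_sum (\<Sum>m. (real m + 1) powr t)) UNIV"
    using norm_summable_imp_has_sum[of "\<lambda>m. (real m + 1) powr t"] s1 by (simp add: summable_sums)
  have h2: "((\<lambda>m::nat. (real (nat \<bar>- int (Suc m)\<bar>) + 1) powr t) has_sum (\<Sum>m. (real (Suc m) + 1) powr t)) UNIV"
    using norm_summable_imp_has_sum[of "\<lambda>m. (real (Suc m) + 1) powr t"] s2 by (simp add: summable_sums)
  show ?thesis using has_sum_int_split[OF h1 h2] by (rule has_sum_imp_summable)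
qed

lemma uu_summable:
  fixes A C z :: complex
  assumes A1: "1 - A \<notin> \<int>\<^sub>\<le>\<^sub>0" and C1: "C \<notin> \<int>\<^sub>\<le>\<^sub>0" and r: "Re (C - A) > 1" and z: "norm z = 1"
  shows "(\<lambda>n. uu A C n * z powi n) summable_on UNIV"
proof -
  obtain K where K: "K > 0" "\<And>n. norm (uu A C n) \<le> K * (real (nat \<bar>n\<bar>) + 1) powr (Re A - Re C)"
    using uu_norm_bound[OF A1 C1] by blast
  have "(\<lambda>n::int. K * (real (nat \<bar>n\<bar>) + 1) powr (Re A - Re C)) summable_on UNIV"
    using r by (intro summable_on_cmult_right powr_int_summable) simp
  then have "(\<lambda>n. norm (uu A C n * z powi n)) summable_on UNIV"
    by (rule summable_on_comparison_test) (use K z in \<open>auto simp: norm_mult norm_power_int\<close>)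
  then show ?thesis by (rule abs_summable_summable)
qed



lemma poch_shift_eq: "c * pochhammer (c + 1) m = (c + of_nat m) * pochhammer c m"
  by (metis pochhammer_rec pochhammer_rec')

lemma uu_rel1:
  fixes A C :: complex
  assumes C1: "C \<notin> \<int>\<^sub>\<le>\<^sub>0"
  shows "C * uu A C n = (C + of_int n) * uu A (C + 1) n"
proof (cases "n \<ge> 0")
  case True
  define m where "m = nat n"
  have n: "n = int m" using True by (simp add: m_def)
  have pc: "pochhammer C m \<noteq> 0" by (rule poch_nz[OF C1])
  have pc1: "pochhammer (C + 1) m \<noteq> 0" by (rule poch_nz[OF nonpos_Ints_add1[OF C1]])
  have e: "C * pochhammer (C + 1) m = (C + of_nat m) * pochhammer C m" by (rule poch_shift_eq)
  have "C / pochhammer C m = (C + of_nat m) / pochhammer (C + 1) m"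
    using pc pc1 e by (simp add: field_simps)
  then have "C * (pochhammer A m / pochhammer C m) = (C + of_nat m) * (pochhammer A m / pochhammer (C + 1) m)"
    by (metis (no_types, lifting) mult.commute times_divide_eq_right)
  then show ?thesis unfolding n uu_def by simp
next
  case False
  define j where "j = nat (- n) - 1"
  have n: "n = - int (Suc j)" using False by (simp add: j_def)
  have "C * pochhammer (1 - C) (Suc j) = (C - of_nat (Suc j)) * pochhammer (- C) (Suc j)"
  proof -
    have e1: "pochhammer (- C) (Suc j) = (- C) * pochhammer (1 - C) j"
      by (simp add: pochhammer_rec)
    have e2: "pochhammer (1 - C) (Suc j) = (1 - C + of_nat j) * pochhammer (1 - C) j"
      by (simp add: pochhammer_rec')
    show ?thesis unfolding e1 e2 by (simp add: algebra_simps)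
  qed
  then show ?thesis unfolding n uu_def by (simp add: field_simps del: of_nat_Suc)
qed

lemma uu_nat: "uu A C (int m) = pochhammer A m / pochhammer C m"
  by (simp add: uu_def)

lemma uu_neg: "uu A C (- int (Suc m)) = pochhammer (1 - C) (Suc m) / pochhammer (1 - A) (Suc m)"
  unfolding uu_def by (simp del: of_nat_Suc)

lemma uu_rel2:
  fixes A C :: complex
  assumes A1: "1 - A \<notin> \<int>\<^sub>\<le>\<^sub>0" and C1: "C \<notin> \<int>\<^sub>\<le>\<^sub>0"
  shows "C * uu A C (n + 1) = (A + of_int n) * uu A (C + 1) n"
proof -
  consider "n \<ge> 0" | "n = -1" | "n \<le> -2" by linarith
  then show ?thesis
  proof cases
    case 1
    define m where "m = nat n"
    have n: "n = int m" using 1 by (simp add: m_def)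
    have n1: "n + 1 = int (Suc m)" using n by simp
    have pc: "pochhammer C m \<noteq> 0" by (rule poch_nz[OF C1])
    have pc1: "pochhammer (C + 1) m \<noteq> 0" by (rule poch_nz[OF nonpos_Ints_add1[OF C1]])
    have cm: "C + of_nat m \<noteq> 0" by (rule nonpos_Int_nz[OF C1])
    have e: "C * pochhammer (C + 1) m = (C + of_nat m) * pochhammer C m" by (rule poch_shift_eq)
    have e': "C / ((C + of_nat m) * pochhammer C m) = 1 / pochhammer (C + 1) m"
    proof -
      have c0: "C \<noteq> 0" using nonpos_Int_nz[OF C1, of 0] by simp
      have "C / ((C + of_nat m) * pochhammer C m) = C / (C * pochhammer (C + 1) m)" by (simp only: e)
      also have "\<dots> = 1 / pochhammer (C + 1) m" using c0 by simp
      finally show ?thesis .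
    qed
    have "C * uu A C (n + 1) = C * ((A + of_nat m) * pochhammer A m / ((C + of_nat m) * pochhammer C m))"
      unfolding n1 uu_nat pochhammer_rec' by (simp add: mult_ac)
    also have "\<dots> = (A + of_nat m) * pochhammer A m * (C / ((C + of_nat m) * pochhammer C m))"
      by simp
    also have "\<dots> = (A + of_int n) * uu A (C + 1) n"
      unfolding e' n uu_def by simp
    finally show ?thesis .
  next
    case 2
    have a1: "1 - A \<noteq> 0" using A1 by auto
    have "(A - 1) * (- C) / (1 - A) = C" using a1 by (simp add: field_simps)
    then show ?thesis unfolding 2 uu_def by simp
  next
    case 3
    define j where "j = nat (- n) - 2"
    have n: "n = - int (Suc (Suc j))" using 3 by (simp add: j_def)
    have n1: "n + 1 = - int (Suc j)" using n by simp
    have nz: "1 - A + of_nat (Suc j) \<noteq> 0" by (rule nonpos_Int_nz[OF A1])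
    have e1: "pochhammer (- C) (Suc (Suc j)) = (- C) * pochhammer (1 - C) (Suc j)"
      by (simp add: pochhammer_rec)
    have e2: "pochhammer (1 - A) (Suc (Suc j)) = (1 - A + of_nat (Suc j)) * pochhammer (1 - A) (Suc j)"
      by (rule pochhammer_rec')
    have e3: "(A + of_int n) * (- C) = C * (1 - A + of_nat (Suc j))"
      unfolding n by (simp add: algebra_simps)
    have "(A + of_int n) * uu A (C + 1) n =
          ((A + of_int n) * (- C)) * pochhammer (1 - C) (Suc j) / ((1 - A + of_nat (Suc j)) * pochhammer (1 - A) (Suc j))"
    proof -
      have cc: "1 - (C + 1) = - C" by simp
      show ?thesis unfolding n uu_neg cc e1 e2 by (simp only: mult.assoc times_divide_eq_right)
    qed
    also have "\<dots> = C * uu A C (n + 1)"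
    proof -
      have cancel: "\<And>X P Q. X \<noteq> (0::complex) \<Longrightarrow> (C * X) * P / (X * Q) = C * (P / Q)" by simp
      show ?thesis unfolding e3 n1 uu_neg by (rule cancel[OF nz])
    qed
    finally show ?thesis ..
  qed
qed



definition Sb :: "complex \<Rightarrow> complex \<Rightarrow> complex \<Rightarrow> complex" where
  "Sb A C z = infsum (\<lambda>n. uu A C n * z powi n) UNIV"

lemma S_rel1:
  fixes A C z :: complex
  assumes A1: "1 - A \<notin> \<int>\<^sub>\<le>\<^sub>0" and C1: "C \<notin> \<int>\<^sub>\<le>\<^sub>0" and r: "Re (C - A) > 1" and z: "norm z = 1"
  shows "C * Sb A C z * (1 - z) = z * (A - C) * Sb A (C + 1) z"
proof -
  have z0: "z \<noteq> 0" using z by auto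
  have C1': "C + 1 \<notin> \<int>\<^sub>\<le>\<^sub>0" by (rule nonpos_Ints_add1[OF C1])
  have r': "Re (C + 1 - A) > 1" using r by simp
  define t where "t n = uu A C n * z powi n" for n
  define v where "v n = uu A (C + 1) n * z powi n" for n
  define S where "S = Sb A C z"
  define Sv where "Sv = Sb A (C + 1) z"
  have ht: "(t has_sum S) UNIV"
    unfolding t_def S_def Sb_def by (rule has_sum_infsum[OF uu_summable[OF A1 C1 r z]])
  have hv: "(v has_sum Sv) UNIV"
    unfolding v_def Sv_def Sb_def by (rule has_sum_infsum[OF uu_summable[OF A1 C1' r' z]])
  have shift: "((\<lambda>n. t (n + 1)) has_sum S) UNIV"
  proof -
    have "((\<lambda>n. t (n + 1)) has_sum S) UNIV = (t has_sum S) UNIV"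
      by (rule has_sum_reindex_bij_witness[where j = "\<lambda>n. n + 1" and i = "\<lambda>n. n - 1"]) auto
    then show ?thesis using ht by simp
  qed
  have pw: "C * t (n + 1) = z * (A - C) * v n + z * C * t n" for n
  proof -
    have "C * t (n + 1) = (C * uu A C (n + 1)) * (z * z powi n)"
      unfolding t_def using z0 by (simp add: power_int_add_1' mult_ac)
    also have "\<dots> = z * ((A + of_int n) * uu A (C + 1) n * z powi n)"
      unfolding uu_rel2[OF A1 C1] by (simp add: mult_ac)
    also have "(A + of_int n) * uu A (C + 1) n * z powi n = (A - C) * v n + (C + of_int n) * uu A (C + 1) n * z powi n"
      unfolding v_def by (simp add: algebra_simps)
    also have "(C + of_int n) * uu A (C + 1) n = C * uu A C n"
      using uu_rel1[OF C1, of A n] by simp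
    finally show ?thesis unfolding t_def by (simp add: algebra_simps)
  qed
  have h1: "((\<lambda>n. C * t (n + 1)) has_sum C * S) UNIV" by (rule has_sum_cmult_right[OF shift])
  have h2: "((\<lambda>n. z * (A - C) * v n + z * C * t n) has_sum (z * (A - C) * Sv + z * C * S)) UNIV"
    by (intro has_sum_add has_sum_cmult_right hv ht)
  have "C * S = z * (A - C) * Sv + z * C * S"
    using has_sum_unique[OF h1 h2[folded pw]] .
  then show ?thesis unfolding S_def[symmetric] Sv_def[symmetric] by (simp add: algebra_simps)
qed



lemma uu_sym: "uu A C n = uu (1 - C) (1 - A) (- n)"
  unfolding uu_def by auto

lemma Sb_sym:
  assumes "z \<noteq> 0"
  shows "Sb A C z = Sb (1 - C) (1 - A) (1 / z)"
  unfolding Sb_def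
proof (rule infsum_reindex_bij_witness[where j = "\<lambda>n. - n" and i = "\<lambda>n. - n"])
  fix n :: int
  show "uu (1 - C) (1 - A) (- n) * (1 / z) powi (- n) = uu A C n * z powi n"
    using assms by (simp add: uu_sym[of A C n] power_int_minus power_int_divide_distrib)
qed auto

lemma S_rel2:
  fixes A C z :: complex
  assumes A1: "1 - A \<notin> \<int>\<^sub>\<le>\<^sub>0" and C1: "C \<notin> \<int>\<^sub>\<le>\<^sub>0" and r: "Re (C - A) > 1" and z: "norm z = 1"
  shows "(1 - A) * Sb A C z * (1 - 1 / z) = (1 / z) * (A - C) * Sb (A - 1) C z"
proof -
  have z0: "z \<noteq> 0" using z by auto
  have A1': "1 - (1 - C) \<notin> \<int>\<^sub>\<le>\<^sub>0" using C1 by simp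
  have r': "Re ((1 - A) - (1 - C)) > 1" using r by simp
  have z': "norm (1 / z) = 1" using z by (simp add: norm_divide)
  have R: "(1 - A) * Sb (1 - C) (1 - A) (1 / z) * (1 - 1 / z) =
           (1 / z) * ((1 - C) - (1 - A)) * Sb (1 - C) (1 - A + 1) (1 / z)"
    by (rule S_rel1[OF A1' A1 r' z'])
  have e1: "Sb (1 - C) (1 - A) (1 / z) = Sb A C z" using Sb_sym[OF z0, of A C] by simp
  have e2: "Sb (1 - C) (1 - A + 1) (1 / z) = Sb (A - 1) C z"
    using Sb_sym[OF z0, of "A - 1" C] by (simp add: algebra_simps)
  show ?thesis using R unfolding e1 e2 by (simp add: algebra_simps)
qed

lemma powr_plus_one:
  fixes x s :: complex
  assumes "x \<noteq> 0"
  shows "x powr (s + 1) = x powr s * x"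
proof -
  have "x powr (s + 1) = x powr s * x powr (of_nat 1)" by (simp add: powr_add)
  also have "x powr (of_nat 1) = x" using powr_complexpow[OF assms, of 1] by simp
  finally show ?thesis .
qed

lemma F_rel1:
  fixes A C z :: complex
  assumes C1: "C \<notin> \<int>\<^sub>\<le>\<^sub>0" and r: "Re (C - A) > 1" and z: "z \<noteq> 0" "z \<noteq> 1"
  shows "C * Fcl A C z * (1 - z) = z * (A - C) * Fcl A (C + 1) z"
proof -
  have CA: "C - A \<notin> \<int>\<^sub>\<le>\<^sub>0" using r by (intro Re_pos_not_nonpos_Int) simp
  have CA0: "C - A \<noteq> 0" using r by auto
  have G0: "Gamma (C - A) \<noteq> 0" using CA by (simp add: Gamma_eq_zero_iff)
  have w0: "1 - 1 / z \<noteq> 0" using z by (auto simp: field_simps)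
  have g1: "Gamma (C + 1) = C * Gamma C" by (rule Gamma_plus1[OF C1])
  have g2: "Gamma (C + 1 - A) = (C - A) * Gamma (C - A)"
    using Gamma_plus1[OF CA] by (simp add: algebra_simps)
  have p: "(1 - 1 / z) powr (C + 1 - 1) = (1 - 1 / z) powr (C - 1) * (1 - 1 / z)"
    using powr_plus_one[OF w0, of "C - 1"] by simp
  show ?thesis unfolding Fcl_def g1 g2 p using z CA0 G0 by (simp add: field_simps)
qed

lemma F_rel2:
  fixes A C z :: complex
  assumes A1: "1 - A \<notin> \<int>\<^sub>\<le>\<^sub>0" and r: "Re (C - A) > 1" and z: "z \<noteq> 0" "z \<noteq> 1"
  shows "(1 - A) * Fcl A C z * (1 - 1 / z) = (1 / z) * (A - C) * Fcl (A - 1) C z"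
proof -
  have CA: "C - A \<notin> \<int>\<^sub>\<le>\<^sub>0" using r by (intro Re_pos_not_nonpos_Int) simp
  have CA0: "C - A \<noteq> 0" using r by auto
  have G0: "Gamma (C - A) \<noteq> 0" using CA by (simp add: Gamma_eq_zero_iff)
  have w0: "1 - z \<noteq> 0" using z by auto
  have g1: "Gamma (1 - (A - 1)) = (1 - A) * Gamma (1 - A)"
    using Gamma_plus1[OF A1] by (simp add: algebra_simps)
  have g2: "Gamma (C - (A - 1)) = (C - A) * Gamma (C - A)"
    using Gamma_plus1[OF CA] by (simp add: algebra_simps)
  have p: "(1 - z) powr (- (A - 1)) = (1 - z) powr (- A) * (1 - z)"
    using powr_plus_one[OF w0, of "- A"] by simp
  show ?thesis unfolding Fcl_def g1 g2 p using z CA0 G0 by (simp add: field_simps)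
qed



lemma step_up:
  fixes A C z :: complex
  assumes A1: "1 - A \<notin> \<int>\<^sub>\<le>\<^sub>0" and C1: "C \<notin> \<int>\<^sub>\<le>\<^sub>0" and r: "Re (C - A) > 1"
      and z: "norm z = 1" "z \<noteq> 1" and IH: "Sb A (C + 1) z = Fcl A (C + 1) z"
  shows "Sb A C z = Fcl A C z"
proof -
  have z0: "z \<noteq> 0" using z by auto
  have c0: "C \<noteq> 0" using C1 by auto
  have "C * Sb A C z * (1 - z) = C * Fcl A C z * (1 - z)"
    unfolding S_rel1[OF A1 C1 r z(1)] F_rel1[OF C1 r z0 z(2)] IH ..
  then show ?thesis using c0 z(2) by simp
qed

lemma step_left:
  fixes A C z :: complex
  assumes A1: "1 - A \<notin> \<int>\<^sub>\<le>\<^sub>0" and C1: "C \<notin> \<int>\<^sub>\<le>\<^sub>0" and r: "Re (C - A) > 1"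
      and z: "norm z = 1" "z \<noteq> 1" and IH: "Sb (A - 1) C z = Fcl (A - 1) C z"
  shows "Sb A C z = Fcl A C z"
proof -
  have z0: "z \<noteq> 0" using z by auto
  have a0: "1 - A \<noteq> 0" using A1 by auto
  have w0: "1 - 1 / z \<noteq> 0" using z z0 by (auto simp: field_simps)
  have "(1 - A) * Sb A C z * (1 - 1 / z) = (1 - A) * Fcl A C z * (1 - 1 / z)"
    unfolding S_rel2[OF A1 C1 r z(1)] F_rel2[OF A1 r z0 z(2)] IH ..
  then show ?thesis using a0 w0 z by auto
qed

lemma ind_C:
  fixes A z :: complex
  assumes A: "Re A < 0" and z: "norm z = 1" "z \<noteq> 1"
  shows "\<forall>C. C \<notin> \<int>\<^sub>\<le>\<^sub>0 \<longrightarrow> Re (C - A) > 1 \<longrightarrow> Re C + real m > 1 \<longrightarrow> Sb A C z = Fcl A C z"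
proof (induction m)
  case 0
  show ?case
  proof (intro allI impI)
    fix C :: complex assume "Re C + real 0 > 1"
    then have C: "Re C > 1" by simp
    show "Sb A C z = Fcl A C z"
      unfolding Sb_def by (rule infsumI[OF base_case[OF A C z]])
  qed
next
  case (Suc m)
  show ?case
  proof (intro allI impI)
    fix C :: complex assume C1: "C \<notin> \<int>\<^sub>\<le>\<^sub>0" and r: "Re (C - A) > 1" and m: "Re C + real (Suc m) > 1"
    have A1: "1 - A \<notin> \<int>\<^sub>\<le>\<^sub>0" using A by (intro Re_pos_not_nonpos_Int) simp
    have "Sb A (C + 1) z = Fcl A (C + 1) z"
      using Suc.IH nonpos_Ints_add1[OF C1] r m by simp
    then show "Sb A C z = Fcl A C z" by (rule step_up[OF A1 C1 r z])
  qed
qed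

lemma ind_A:
  fixes C z :: complex
  assumes C1: "C \<notin> \<int>\<^sub>\<le>\<^sub>0" and z: "norm z = 1" "z \<noteq> 1"
  shows "\<forall>A. 1 - A \<notin> \<int>\<^sub>\<le>\<^sub>0 \<longrightarrow> Re (C - A) > 1 \<longrightarrow> Re A - real k < 0 \<longrightarrow> Sb A C z = Fcl A C z"
proof (induction k)
  case 0
  show ?case
  proof (intro allI impI)
    fix A :: complex assume r: "Re (C - A) > 1" and "Re A - real 0 < 0"
    then have A: "Re A < 0" by simp
    define m where "m = nat \<lceil>2 - Re C\<rceil>"
    have "Re C + real m > 1" unfolding m_def by linarith
    then show "Sb A C z = Fcl A C z" using ind_C[OF A z, of m] C1 r by blast
  qed
next
  case (Suc k)
  show ?case
  proof (intro allI impI)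
    fix A :: complex assume A1: "1 - A \<notin> \<int>\<^sub>\<le>\<^sub>0" and r: "Re (C - A) > 1" and k: "Re A - real (Suc k) < 0"
    have A1': "1 - (A - 1) \<notin> \<int>\<^sub>\<le>\<^sub>0" using nonpos_Ints_add1[OF A1] by (simp add: algebra_simps)
    have "Sb (A - 1) C z = Fcl (A - 1) C z"
      using Suc.IH A1' r k by simp
    then show "Sb A C z = Fcl A C z" by (rule step_left[OF A1 C1 r z])
  qed
qed

theorem S_closed:
  fixes A C z :: complex
  assumes A1: "1 - A \<notin> \<int>\<^sub>\<le>\<^sub>0" and C1: "C \<notin> \<int>\<^sub>\<le>\<^sub>0" and r: "Re (C - A) > 1"
      and z: "norm z = 1" "z \<noteq> 1"
  shows "((\<lambda>n. uu A C n * z powi n) has_sum Fcl A C z) UNIV"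
proof -
  define k where "k = nat \<lceil>Re A + 1\<rceil>"
  have "Re A - real k < 0" unfolding k_def by linarith
  then have "Sb A C z = Fcl A C z" using ind_A[OF C1 z, of k] A1 r by blast
  then show ?thesis using has_sum_infsum[OF uu_summable[OF A1 C1 r z(1)]] unfolding Sb_def by simp
qed



lemma exp_ln2_half: "exp (ln 2 / 2 :: real) = sqrt 2"
proof -
  have "(2::real) powr (1/2) = exp (1/2 * ln 2)" by (simp add: powr_def)
  then show ?thesis using powr_half_sqrt[of 2] by simp
qed

lemma Ln_1pi: "Ln (1 + \<i>) = of_real (ln 2 / 2) + \<i> * of_real (pi / 4)"
proof (rule Ln_unique)
  have "exp (of_real (ln 2 / 2) + \<i> * of_real (pi / 4)) = of_real (sqrt 2) * cis (pi / 4)"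
    by (simp add: exp_eq_polar exp_ln2_half)
  also have "\<dots> = 1 + \<i>"
    by (simp add: complex_eq_iff cos_45 sin_45)
  finally show "exp (of_real (ln 2 / 2) + \<i> * of_real (pi / 4)) = 1 + \<i>" .
  show "- pi < Im (complex_of_real (ln 2 / 2) + \<i> * complex_of_real (pi / 4))"
    using pi_gt_zero by simp
  show "Im (complex_of_real (ln 2 / 2) + \<i> * complex_of_real (pi / 4)) \<le> pi"
    using pi_gt_zero by simp
qed

lemma Ln_1mi: "Ln (1 - \<i>) = of_real (ln 2 / 2) - \<i> * of_real (pi / 4)"
proof (rule Ln_unique)
  have "exp (of_real (ln 2 / 2) - \<i> * of_real (pi / 4)) = of_real (sqrt 2) * cis (- (pi / 4))"
    by (simp add: exp_eq_polar exp_ln2_half)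
  also have "\<dots> = 1 - \<i>"
    by (simp add: complex_eq_iff cos_45 sin_45)
  finally show "exp (of_real (ln 2 / 2) - \<i> * of_real (pi / 4)) = 1 - \<i>" .
  show "- pi < Im (complex_of_real (ln 2 / 2) - \<i> * complex_of_real (pi / 4))"
    using pi_gt_zero by simp
  show "Im (complex_of_real (ln 2 / 2) - \<i> * complex_of_real (pi / 4)) \<le> pi"
    using pi_gt_zero by (simp, linarith)
qed

lemma exp_pair: "(exp (X + \<i> * w) + exp (X - \<i> * w)) / 2 = exp X * cos w"
  by (simp add: cos_exp_eq exp_add exp_diff exp_minus field_simps)

lemma closed_eval:
  fixes a c :: complex
  shows "(Fcl (2 * a) (2 * c) \<i> + Fcl (2 * a) (2 * c) (- \<i>)) / 2 =
         Gamma (2 * c) * Gamma (1 - 2 * a) / Gamma (2 * c - 2 * a)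
           * (2::complex) powr (c - a - 1/2) * cos ((2 * c + 2 * a - 1) * of_real pi / 4)"
proof -
  define K where "K = Gamma (2 * c) * Gamma (1 - 2 * a) / Gamma (2 * c - 2 * a)"
  define l where "l = complex_of_real (ln 2 / 2)"
  define t where "t = complex_of_real (pi / 4)"
  define X where "X = (2 * c - 1 - 2 * a) * l"
  define w where "w = (2 * c + 2 * a - 1) * t"
  have i1: "1 - 1 / \<i> = 1 + \<i>" by (simp add: field_simps)
  have i2: "1 - 1 / (- \<i>) = 1 - \<i>" by (simp add: field_simps)
  have i3: "1 - - \<i> = 1 + \<i>" by simp
  have nz1: "1 + \<i> \<noteq> 0" by (simp add: complex_eq_iff)
  have nz2: "1 - \<i> \<noteq> 0" by (simp add: complex_eq_iff)
  have F1: "Fcl (2 * a) (2 * c) \<i> = K * exp (X + \<i> * w)"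
  proof -
    have "Fcl (2 * a) (2 * c) \<i> = K * (exp (- (2 * a) * (l - \<i> * t)) * exp ((2 * c - 1) * (l + \<i> * t)))"
      unfolding Fcl_def K_def i1 powr_def using nz1 nz2
      by (simp add: Ln_1pi Ln_1mi l_def t_def mult_ac)
    also have "exp (- (2 * a) * (l - \<i> * t)) * exp ((2 * c - 1) * (l + \<i> * t)) = exp (X + \<i> * w)"
      unfolding X_def w_def by (simp add: exp_add[symmetric] algebra_simps)
    finally show ?thesis .
  qed
  have F2: "Fcl (2 * a) (2 * c) (- \<i>) = K * exp (X - \<i> * w)"
  proof -
    have "Fcl (2 * a) (2 * c) (- \<i>) = K * (exp (- (2 * a) * (l + \<i> * t)) * exp ((2 * c - 1) * (l - \<i> * t)))"
      unfolding Fcl_def K_def i2 i3 powr_def using nz1 nz2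
      by (simp add: Ln_1pi Ln_1mi l_def t_def mult_ac)
    also have "exp (- (2 * a) * (l + \<i> * t)) * exp ((2 * c - 1) * (l - \<i> * t)) = exp (X - \<i> * w)"
      unfolding X_def w_def by (simp add: exp_add[symmetric] algebra_simps)
    finally show ?thesis .
  qed
  have "(Fcl (2 * a) (2 * c) \<i> + Fcl (2 * a) (2 * c) (- \<i>)) / 2 = K * ((exp (X + \<i> * w) + exp (X - \<i> * w)) / 2)"
    unfolding F1 F2 by (simp add: field_simps)
  also have "\<dots> = K * (exp X * cos w)" by (simp only: exp_pair)
  also have "exp X = (2::complex) powr (c - a - 1/2)"
  proof -
    have L2: "Ln (2::complex) = of_real (ln 2)" using Ln_of_real[of 2] by simp
    show ?thesis unfolding powr_def X_def l_def L2
      by (simp, rule arg_cong[where f = exp]) (simp add: field_simps)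
  qed
  also have "w = (2 * c + 2 * a - 1) * of_real pi / 4" unfolding w_def t_def by simp
  finally show ?thesis unfolding K_def by (simp add: mult_ac)
qed



lemma prod_minus_poch:
  fixes x :: complex
  shows "(\<Prod>k=1..j. (x - of_nat k)) = (-1) ^ j * pochhammer (1 - x) j"
proof (induction j)
  case 0
  then show ?case by simp
next
  case (Suc j)
  have "(\<Prod>k=1..Suc j. (x - of_nat k)) = (x - of_nat (Suc j)) * (\<Prod>k=1..j. (x - of_nat k))"
    by (simp add: prod.nat_ivl_Suc')
  also have "\<dots> = (x - of_nat (Suc j)) * ((-1) ^ j * pochhammer (1 - x) j)" by (simp only: Suc.IH)
  also have "\<dots> = (-1) ^ Suc j * ((1 - x + of_nat j) * pochhammer (1 - x) j)"
    by (simp add: algebra_simps)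
  also have "(1 - x + of_nat j) * pochhammer (1 - x) j = pochhammer (1 - x) (Suc j)"
    by (simp add: pochhammer_rec')
  finally show ?case .
qed

lemma poch_int_neg: "poch_int x (- int j) = 1 / ((-1) ^ j * pochhammer (1 - x) j)"
proof (cases "j = 0")
  case True
  then show ?thesis by (simp add: poch_int_def)
next
  case False
  then show ?thesis unfolding poch_int_def prod_minus_poch by simp
qed

lemma pair_pos: "pochhammer x j * pochhammer (x + 1/2) j = pochhammer (2 * x) (2 * j) / of_nat (2 ^ (2 * j))"
  for x :: complex
  by (simp add: pochhammer_double)

lemma pair_neg: "poch_int x (- int j) * poch_int (x + 1/2) (- int j) = of_nat (2 ^ (2 * j)) / pochhammer (1 - 2 * x) (2 * j)"
  for x :: complex
proof -
  have d: "pochhammer (1 - 2 * x) (2 * j) = of_nat (2 ^ (2 * j)) * pochhammer (1/2 - x) j * pochhammer (1 - x) j"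
    using pochhammer_double[of "1/2 - x" j] by (simp add: algebra_simps)
  have s: "(-1) ^ j * (-1) ^ j = (1::complex)" by (simp add: power_mult_distrib[symmetric])
  have "poch_int x (- int j) * poch_int (x + 1/2) (- int j) =
        1 / (((-1) ^ j * (-1) ^ j) * (pochhammer (1/2 - x) j * pochhammer (1 - x) j))"
    unfolding poch_int_neg by (simp add: algebra_simps)
  also have "\<dots> = 1 / (pochhammer (1/2 - x) j * pochhammer (1 - x) j)" unfolding s by simp
  also have "\<dots> = of_nat (2 ^ (2 * j)) / pochhammer (1 - 2 * x) (2 * j)"
    unfolding d by (simp add: field_simps del: of_nat_power)
  finally show ?thesis .
qed

lemma term_identity:
  fixes a c :: complex
  shows "H22_term a (a + 1/2) c (c + 1/2) (-1) m = uu (2 * a) (2 * c) (2 * m) * (-1) powi m"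
proof (cases "m \<ge> 0")
  case True
  define j where "j = nat m"
  have m: "m = int j" using True by (simp add: j_def)
  have n2: "2 * m = int (2 * j)" using m by simp
  have N: "of_nat (2 ^ (2 * j)) \<noteq> (0::complex)" by simp
  have "H22_term a (a + 1/2) c (c + 1/2) (-1) m =
        (pochhammer (2 * a) (2 * j) / of_nat (2 ^ (2 * j))) / (pochhammer (2 * c) (2 * j) / of_nat (2 ^ (2 * j))) * (-1) powi m"
    unfolding H22_term_def m poch_int_def by (simp add: pair_pos del: of_nat_power)
  also have "(pochhammer (2 * a) (2 * j) / of_nat (2 ^ (2 * j))) / (pochhammer (2 * c) (2 * j) / of_nat (2 ^ (2 * j)))
      = pochhammer (2 * a) (2 * j) / pochhammer (2 * c) (2 * j)"
    using N by (simp add: divide_simps del: of_nat_power)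
  also have "pochhammer (2 * a) (2 * j) / pochhammer (2 * c) (2 * j) = uu (2 * a) (2 * c) (2 * m)"
    unfolding n2 uu_nat ..
  finally show ?thesis .
next
  case False
  define j where "j = nat (- m)"
  have m: "m = - int j" using False by (simp add: j_def)
  have n2: "2 * m = - int (2 * j)" using m by simp
  have N: "of_nat (2 ^ (2 * j)) \<noteq> (0::complex)" by simp
  have "H22_term a (a + 1/2) c (c + 1/2) (-1) m =
        (of_nat (2 ^ (2 * j)) / pochhammer (1 - 2 * a) (2 * j)) / (of_nat (2 ^ (2 * j)) / pochhammer (1 - 2 * c) (2 * j)) * (-1) powi m"
    unfolding H22_term_def unfolding m pair_neg ..
  also have "(of_nat (2 ^ (2 * j)) / pochhammer (1 - 2 * a) (2 * j)) / (of_nat (2 ^ (2 * j)) / pochhammer (1 - 2 * c) (2 * j))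
      = pochhammer (1 - 2 * c) (2 * j) / pochhammer (1 - 2 * a) (2 * j)"
    using N by (simp add: divide_simps del: of_nat_power)
  also have "pochhammer (1 - 2 * c) (2 * j) / pochhammer (1 - 2 * a) (2 * j) = uu (2 * a) (2 * c) (2 * m)"
  proof (cases "j = 0")
    case True
    then show ?thesis using n2 by (simp add: uu_def)
  next
    case False
    have "nat (2 * int j) = 2 * j" by (simp add: nat_mult_distrib)
    then show ?thesis unfolding n2 uu_def using False by simp
  qed
  finally show ?thesis .
qed



theorem mainTheorem3:
  fixes a c :: complex
  assumes "\<forall>n::nat. 2 * c \<noteq> - of_nat n"
      and "\<forall>n::nat. n \<ge> 1 \<longrightarrow> 2 * a \<noteq> of_nat n"
      and "Re (c - a) > 1/2"
  shows "H22_term a (a + 1/2) c (c + 1/2) (-1) summable_on (UNIV::int set)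
     \<and> H22 a (a + 1/2) c (c + 1/2) (-1)
         = Gamma (2*c) * Gamma (1 - 2*a) / Gamma (2*c - 2*a)
           * (2::complex) powr (c - a - 1/2)
           * cos ((2*c + 2*a - 1) * of_real pi / 4)"
proof -
  define A where "A = 2 * a"
  define C where "C = 2 * c"
  have C1: "C \<notin> \<int>\<^sub>\<le>\<^sub>0"
  proof
    assume "C \<in> \<int>\<^sub>\<le>\<^sub>0"
    then obtain n where "C = - of_nat n" by (auto elim!: nonpos_Ints_cases')
    with assms(1) show False unfolding C_def by blast
  qed
  have A1: "1 - A \<notin> \<int>\<^sub>\<le>\<^sub>0"
  proof
    assume "1 - A \<in> \<int>\<^sub>\<le>\<^sub>0"
    then obtain n where "1 - A = - of_nat n" by (auto elim!: nonpos_Ints_cases')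
    then have "2 * a = of_nat (Suc n)" unfolding A_def by (simp add: algebra_simps)
    moreover have "Suc n \<ge> 1" by simp
    ultimately show False using assms(2) by blast
  qed
  have r: "Re (C - A) > 1" using assms(3) unfolding A_def C_def by simp
  have ni: "norm \<i> = 1" "\<i> \<noteq> 1" by (auto simp: complex_eq_iff)
  have nmi: "norm (- \<i>) = 1" "- \<i> \<noteq> 1" by (auto simp: complex_eq_iff)
  define g where "g n = uu A C n * (\<i> powi n + (- \<i>) powi n) / 2" for n
  define s where "s = (Fcl A C \<i> + Fcl A C (- \<i>)) / 2"
  have hg: "(g has_sum s) UNIV"
  proof -
    have "((\<lambda>n. uu A C n * \<i> powi n + uu A C n * (- \<i>) powi n) has_sum (Fcl A C \<i> + Fcl A C (- \<i>))) UNIV"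
      by (intro has_sum_add S_closed[OF A1 C1 r ni] S_closed[OF A1 C1 r nmi])
    from has_sum_divide_const[OF this, of 2] show ?thesis
      unfolding g_def s_def by (simp add: algebra_simps)
  qed
  have ipow: "\<i> powi (2 * m) = (-1) powi m" for m :: int
    by (simp add: power_int_mult)
  have mipow: "(- \<i>) powi (2 * m) = (-1) powi m" for m :: int
    by (simp add: power_int_mult)
  have geven: "g (2 * m) = uu A C (2 * m) * (-1) powi m" for m
    unfolding g_def ipow mipow by simp
  have godd: "g n = 0" if "n \<notin> range (\<lambda>m::int. 2 * m)" for n
  proof -
    have "odd n" using that by (auto elim!: evenE)
    then obtain m where n: "n = 2 * m + 1" by (auto elim!: oddE)
    have "\<i> powi n = (-1) powi m * \<i>" unfolding n by (subst power_int_add_1) (auto simp: ipow)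
    moreover have "(- \<i>) powi n = (-1) powi m * (- \<i>)" unfolding n by (subst power_int_add_1) (auto simp: mipow)
    ultimately show ?thesis unfolding g_def by simp
  qed
  have "(g has_sum s) (range (\<lambda>m::int. 2 * m))"
  proof -
    have "(g has_sum s) UNIV \<longleftrightarrow> (g has_sum s) (range (\<lambda>m::int. 2 * m))"
      by (rule has_sum_cong_neutral) (use godd in auto)
    then show ?thesis using hg by simp
  qed
  moreover have "inj (\<lambda>m::int. 2 * m)" by (auto simp: inj_def)
  ultimately have "((g \<circ> (\<lambda>m::int. 2 * m)) has_sum s) UNIV"
    using has_sum_reindex by blast
  moreover have "g \<circ> (\<lambda>m::int. 2 * m) = H22_term a (a + 1/2) c (c + 1/2) (-1)"
    by (rule ext) (simp add: geven term_identity A_def C_def)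
  ultimately have H: "(H22_term a (a + 1/2) c (c + 1/2) (-1) has_sum s) UNIV" by simp
  have "s = Gamma (2*c) * Gamma (1 - 2*a) / Gamma (2*c - 2*a)
           * (2::complex) powr (c - a - 1/2)
           * cos ((2*c + 2*a - 1) * of_real pi / 4)"
    unfolding s_def A_def C_def by (rule closed_eval)
  then show ?thesis using H unfolding H22_def by (auto intro: has_sum_imp_summable infsumI)
qed


end
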